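(* Let $\Gamma(\mathbf z)=\sum_{\mathbf i\in\mathbb N^d} f_{\mathbf i}\mathbf z^{\mathbf i}$ be a power series with nonnegative coefficients whose domain of absolute convergence has nonempty interior $\mathscr D\subset\mathbb C^d$, with $\mathscr D\ne\mathbb C^d$. Let $\nu(S)=\sum_{\mathbf i\in S\cap\mathbb N^d} f_{\mathbf i}$ for $S\subset\mathbb R^d$. Assume condition (CG): there exist $a,b,c>0$ with $\nu(B_{\mathbf x+\mathbf y}(a))\ge c\,\nu(B_{\mathbf x}(b))\nu(B_{\mathbf y}(b))$ for all $\mathbf x,\mathbf y\in\mathbb R^d$, and assume $\sup_{\|\mathbf x\|=1}\psi_\Gamma(\mathbf x)<\infty$. Then for every $\mathbf x\in\mathbb R^d_{\ge0}$, $$\psi_\Gamma(\mathbf x)=\inf_{\mathbf z\in\partial\mathscr D}\Big(-\sum_{i=1}^d x_i\log|z_i|\Big).$$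
   Context: $\|\cdot\|$ is the $\ell^1$ norm on $\mathbb R^d$, $B_{\mathbf x}(a)$ the ball of radius $a$ about $\mathbf x$ for this norm. The indicatrice $\psi_\Gamma$ is defined by: for an open cone $C\subset\mathbb R^d$, $\tau_C=\limsup_{R\to\infty}\frac1R\log\Big(\sum_{\mathbf i\in C\cap\mathbb N^d,\ R\le\|\mathbf i\|\le R+1} f_{\mathbf i}\Big)$ (with $\log0=-\infty$), and for $\mathbf x\ne0$, $\psi_\Gamma(\mathbf x)=\|\mathbf x\|\inf_{C\ni\mathbf x}\tau_C$ over open cones containing $\mathbf x$; $\psi_\Gamma(\mathbf 0)=0$. In the expression $-\sum x_i\log|z_i|$, a term with $z_i=0$ is $+\infty$ if $x_i>0$ and $0$ if $x_i=0$. *)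

theory Defs
  imports "HOL-Analysis.Analysis"
begin

definition l1norm :: "real ^ 'd \<Rightarrow> real" where
  "l1norm x = (\<Sum>j\<in>UNIV. \<bar>x $ j\<bar>)"

definition idx_vec :: "nat ^ 'd \<Rightarrow> real ^ 'd" where
  "idx_vec i = (\<chi> j. real (i $ j))"

definition monom :: "complex ^ 'd \<Rightarrow> nat ^ 'd \<Rightarrow> complex" where
  "monom z i = (\<Prod>j\<in>UNIV. (z $ j) ^ (i $ j))"

definition abs_conv_domain :: "(nat ^ 'd \<Rightarrow> real) \<Rightarrow> (complex ^ 'd) set" where
  "abs_conv_domain f = {z. (\<lambda>i. f i * norm (monom z i)) summable_on UNIV}"

definition nu_ball :: "(nat ^ 'd \<Rightarrow> real) \<Rightarrow> real ^ 'd \<Rightarrow> real \<Rightarrow> real" where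
  "nu_ball f x a = (\<Sum>i\<in>{i. l1norm (idx_vec i - x) \<le> a}. f i)"

definition open_cone :: "(real ^ 'd) set \<Rightarrow> bool" where
  "open_cone C \<longleftrightarrow> open C \<and> (\<forall>y\<in>C. \<forall>t>0. t *\<^sub>R y \<in> C)"

definition logE :: "real \<Rightarrow> ereal" where
  "logE s = (if s > 0 then ereal (ln s) else -\<infinity>)"

definition tau :: "(nat ^ 'd \<Rightarrow> real) \<Rightarrow> (real ^ 'd) set \<Rightarrow> ereal" where
  "tau f C = Limsup at_top (\<lambda>R::real. ereal (1 / R) *
      logE (\<Sum>i\<in>{i. idx_vec i \<in> C \<and> R \<le> l1norm (idx_vec i) \<and> l1norm (idx_vec i) \<le> R + 1}. f i))"

definition indicatrice :: "(nat ^ 'd \<Rightarrow> real) \<Rightarrow> real ^ 'd \<Rightarrow> ereal" where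
  "indicatrice f x = (if x = 0 then 0
     else ereal (l1norm x) * (INF C\<in>{C. open_cone C \<and> x \<in> C}. tau f C))"

definition neglogterm :: "real \<Rightarrow> complex \<Rightarrow> ereal" where
  "neglogterm xj zj = (if zj = 0 then (if xj > 0 then \<infinity> else 0)
                       else ereal (- xj * ln (norm zj)))"

end

theory Submission
  imports Defs "HOL-Real_Asymp.Real_Asymp"
begin

lemma box_sub: "{i::nat^'d. \<forall>j. i$j \<le> B} \<subseteq> vec_lambda ` (PiE UNIV (\<lambda>_. {..B}))"
proof
  fix i :: "nat^'d" assume "i \<in> {i. \<forall>j. i$j \<le> B}"
  then have "(\<lambda>j. i$j) \<in> PiE UNIV (\<lambda>_. {..B})" by auto
  moreover have "i = vec_lambda (\<lambda>j. i$j)" by simp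
  ultimately show "i \<in> vec_lambda ` (PiE UNIV (\<lambda>_. {..B}))" by blast
qed

lemma box_finite: "finite {i::nat^'d. \<forall>j. i$j \<le> B}"
  by (rule finite_subset[OF box_sub]) (auto intro!: finite_PiE)

lemma box_card: "card {i::nat^'d. \<forall>j. i$j \<le> B} \<le> (B+1)^CARD('d)"
proof -
  have "card {i::nat^'d. \<forall>j. i$j \<le> B} \<le> card (vec_lambda ` (PiE (UNIV::'d set) (\<lambda>_. {..B})))"
    by (rule card_mono[OF _ box_sub]) (auto intro!: finite_PiE)
  also have "\<dots> \<le> card (PiE (UNIV::'d set) (\<lambda>_. {..B}))" by (rule card_image_le) (auto intro!: finite_PiE)
  also have "\<dots> = (B+1)^CARD('d)" by (simp add: card_PiE)
  finally show ?thesis .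
qed

lemma l1norm_idx: "l1norm (idx_vec i) = (\<Sum>j\<in>UNIV. real (i$j))"
  by (simp add: l1norm_def idx_vec_def)

lemma l1norm_nonneg: "l1norm x \<ge> 0"
  by (simp add: l1norm_def sum_nonneg)

lemma l1norm_triangle: "l1norm (x + y) \<le> l1norm x + l1norm y"
  unfolding l1norm_def by (simp add: sum.distrib[symmetric] sum_mono abs_triangle_ineq)

lemma l1norm_minus: "l1norm (x - y) = l1norm (y - x)"
  unfolding l1norm_def by (simp add: abs_minus_commute)

lemma l1norm_scale: "l1norm (c *\<^sub>R x) = \<bar>c\<bar> * l1norm x"
  unfolding l1norm_def by (simp add: abs_mult sum_distrib_left)

lemma l1norm_uminus: "l1norm (- x) = l1norm x"
  unfolding l1norm_def by simp

lemma l1norm_zero[simp]: "l1norm 0 = 0"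
  unfolding l1norm_def by simp

lemma l1norm_eq0: "l1norm x = 0 \<longleftrightarrow> x = 0"
proof
  assume "l1norm x = 0"
  then have "\<forall>j\<in>UNIV. \<bar>x$j\<bar> = 0" unfolding l1norm_def by (subst (asm) sum_nonneg_eq_0_iff) auto
  then show "x = 0" by (simp add: vec_eq_iff)
qed simp

lemma l1norm_comp: "\<bar>x$j\<bar> \<le> l1norm x"
  unfolding l1norm_def by (rule member_le_sum) auto

lemma norm_le_l1norm: "norm x \<le> l1norm x"
  unfolding l1norm_def by (rule norm_le_l1_cart)

lemma l1norm_add_nonneg: "(\<And>j. x$j \<ge> 0) \<Longrightarrow> (\<And>j. y$j \<ge> 0) \<Longrightarrow> l1norm (x+y) = l1norm x + l1norm y"
  unfolding l1norm_def by (simp add: sum.distrib)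

lemma l1norm_nonneg_eq: "(\<And>j. x$j \<ge> 0) \<Longrightarrow> l1norm x = (\<Sum>j\<in>UNIV. x$j)"
  unfolding l1norm_def by simp

lemma continuous_l1norm: "continuous_on S l1norm"
  unfolding l1norm_def by (intro continuous_intros)

lemma idx_vec_add: "idx_vec (p + q) = idx_vec p + idx_vec q"
  by (simp add: idx_vec_def vec_eq_iff)

lemma idx_vec_nonneg: "idx_vec i $ j \<ge> 0"
  by (simp add: idx_vec_def)


lemma l1ball_lattice_card:
  assumes "a \<ge> 0"
  shows "finite {i::nat^'d. l1norm (idx_vec i - z) \<le> a} \<and>
         card {i::nat^'d. l1norm (idx_vec i - z) \<le> a} \<le> (nat \<lfloor>2*a\<rfloor> + 1)^CARD('d)"
proof -
  define m where "m = (\<chi> j. nat \<lceil>z$j - a\<rceil>)"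
  define S where "S = {i::nat^'d. l1norm (idx_vec i - z) \<le> a}"
  have comp: "\<bar>real (i$j) - z$j\<bar> \<le> a" if "i \<in> S" for i j
    using l1norm_comp[of "idx_vec i - z" j] that by (simp add: S_def idx_vec_def)
  have ge: "m$j \<le> i$j" if "i \<in> S" for i j
  proof -
    have "z$j - a \<le> real (i$j)" using comp[OF that, of j] by linarith
    then have "\<lceil>z$j - a\<rceil> \<le> int (i$j)" by (simp add: ceiling_le_iff)
    then show ?thesis unfolding m_def by (simp add: nat_le_iff)
  qed
  have inj: "inj_on (\<lambda>i. i - m) S"
  proof (rule inj_onI)
    fix i k assume "i \<in> S" "k \<in> S" "i - m = k - m"
    then have "\<forall>j. i$j - m$j = k$j - m$j" by (simp add: vec_eq_iff)
    then show "i = k" using ge[OF \<open>i\<in>S\<close>] ge[OF \<open>k\<in>S\<close>] unfolding vec_eq_iff by (metis le_add_diff_inverse)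
  qed
  have img: "(\<lambda>i. i - m) ` S \<subseteq> {i. \<forall>j. i$j \<le> nat \<lfloor>2*a\<rfloor>}"
  proof clarsimp
    fix i j assume "i \<in> S"
    have c: "\<bar>real (i$j) - z$j\<bar> \<le> a" by (rule comp[OF \<open>i\<in>S\<close>])
    have "real (m$j) \<ge> z$j - a" unfolding m_def by simp linarith
    then have "real (i$j) - real (m$j) \<le> 2*a" using c by linarith
    moreover have "m$j \<le> i$j" by (rule ge[OF \<open>i\<in>S\<close>])
    ultimately have "real (i$j - m$j) \<le> 2*a" by (simp add: of_nat_diff)
    then show "i$j - m$j \<le> nat \<lfloor>2*a\<rfloor>" by (simp add: le_nat_iff le_floor_iff)
  qed
  have fin: "finite S"
    using finite_imageD[OF finite_subset[OF img box_finite] inj] .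
  have "card S = card ((\<lambda>i. i - m) ` S)" using card_image[OF inj] by simp
  also have "\<dots> \<le> card {i::nat^'d. \<forall>j. i$j \<le> nat \<lfloor>2*a\<rfloor>}" by (rule card_mono[OF box_finite img])
  also have "\<dots> \<le> (nat \<lfloor>2*a\<rfloor> + 1)^CARD('d)" by (rule box_card)
  finally show ?thesis using fin by (simp add: S_def)
qed

lemma shell_sub_box:
  "{i::nat^'d. l1norm (idx_vec i) \<le> R} \<subseteq> {i. \<forall>j. i$j \<le> nat \<lfloor>R\<rfloor>}"
proof clarsimp
  fix i :: "nat^'d" and j assume "l1norm (idx_vec i) \<le> R"
  then have "real (i$j) \<le> R" using l1norm_comp[of "idx_vec i" j] by (simp add: idx_vec_def)
  then show "i$j \<le> nat \<lfloor>R\<rfloor>" by (simp add: le_nat_iff le_floor_iff)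
qed

lemma lowset_finite: "finite {i::nat^'d. l1norm (idx_vec i) \<le> R}"
  by (rule finite_subset[OF shell_sub_box box_finite])

lemma lowset_card: "R \<ge> 0 \<Longrightarrow> real (card {i::nat^'d. l1norm (idx_vec i) \<le> R}) \<le> (R+1)^CARD('d)"
proof -
  assume R: "R \<ge> 0"
  have "card {i::nat^'d. l1norm (idx_vec i) \<le> R} \<le> (nat \<lfloor>R\<rfloor> + 1)^CARD('d)"
    using card_mono[OF box_finite shell_sub_box] box_card le_trans by blast
  then have "real (card {i::nat^'d. l1norm (idx_vec i) \<le> R}) \<le> real ((nat \<lfloor>R\<rfloor> + 1)^CARD('d))"
    by linarith
  also have "\<dots> = (real (nat \<lfloor>R\<rfloor>) + 1)^CARD('d)" by (simp add: add.commute)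
  also have "\<dots> \<le> (R+1)^CARD('d)" using R by (intro power_mono) auto
  finally show ?thesis .
qed


lemma asym1: "((\<lambda>R::real. (c * ln (R+2) + b) / R) \<longlongrightarrow> 0) at_top"
proof -
  have "((\<lambda>R::real. c * (ln (R+2) / R) + b * (1/R)) \<longlongrightarrow> c * 0 + b * 0) at_top"
    by (intro tendsto_intros) real_asymp+
  then show ?thesis by (simp add: add_divide_distrib)
qed

lemma ev_small: "\<epsilon> > 0 \<Longrightarrow> eventually (\<lambda>R::real. (c * ln (R+2) + b) / R < \<epsilon>) at_top"
  using order_tendstoD(2)[OF asym1] by blast

lemma frequently_at_top_real: "frequently P (at_top::real filter) \<longleftrightarrow> (\<forall>N. \<exists>R\<ge>N. P R)"
  unfolding frequently_def eventually_at_top_linorder by auto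

lemma ereal_mult_logE:
  assumes "R > 0" "s > 0" shows "ereal (1/R) * logE s = ereal (ln s / R)"
  using assms by (simp add: logE_def)

lemma ereal_mult_logE0:
  assumes "R > 0" "\<not> s > 0" shows "ereal (1/R) * logE s = -\<infinity>"
  using assms by (simp add: logE_def)

locale ps =
  fixes f :: "nat^'d \<Rightarrow> real"
  assumes nonneg: "\<And>i. f i \<ge> 0"
begin

definition shell :: "(real^'d) set \<Rightarrow> real \<Rightarrow> (nat^'d) set" where
  "shell C R = {i. idx_vec i \<in> C \<and> R \<le> l1norm (idx_vec i) \<and> l1norm (idx_vec i) \<le> R + 1}"

lemma shell_finite: "finite (shell C R)"
  by (rule finite_subset[OF _ lowset_finite[of "R+1"]]) (auto simp: shell_def)

lemma shell_card: "R \<ge> 0 \<Longrightarrow> real (card (shell C R)) \<le> (R+2)^CARD('d)"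
proof -
  assume R: "R \<ge> 0"
  have "card (shell C R) \<le> card {i::nat^'d. l1norm (idx_vec i) \<le> R + 1}"
    by (rule card_mono[OF lowset_finite]) (auto simp: shell_def)
  then have "real (card (shell C R)) \<le> real (card {i::nat^'d. l1norm (idx_vec i) \<le> R + 1})" by simp
  also have "\<dots> \<le> (R+1+1)^CARD('d)" using lowset_card[of "R+1"] R by simp
  finally show ?thesis by (simp add: add.assoc)
qed

lemma tau_eq: "tau f C = Limsup at_top (\<lambda>R. ereal (1/R) * logE (sum f (shell C R)))"
  by (simp add: tau_def shell_def)

lemma sum_shell_nonneg: "sum f (shell C R) \<ge> 0"
  by (simp add: sum_nonneg nonneg)

lemma le_sum_shell: "i \<in> shell C R \<Longrightarrow> f i \<le> sum f (shell C R)"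
  by (rule member_le_sum[OF _ _ shell_finite]) (auto simp: nonneg)

lemma T_up:
  assumes b: "\<And>R i. R \<ge> Rs \<Longrightarrow> i \<in> shell C R \<Longrightarrow> f i \<le> exp (\<alpha>*R + \<beta>)"
  shows "tau f C \<le> ereal \<alpha>"
  unfolding tau_eq Limsup_le_iff
proof (intro allI impI)
  fix y :: ereal assume y: "y > ereal \<alpha>"
  show "eventually (\<lambda>R. y > ereal (1/R) * logE (sum f (shell C R))) at_top"
  proof (cases y)
    case PInf
    have "eventually (\<lambda>R::real. R > 0) at_top" by (rule eventually_gt_at_top)
    then show ?thesis
    proof eventually_elim
      case (elim R)
      show ?case using elim PInf
        by (cases "sum f (shell C R) > 0") (simp_all add: ereal_mult_logE ereal_mult_logE0)
    qed
  next
    case (real y')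
    with y have "y' - \<alpha> > 0" by simp
    from ev_small[OF this, of "real CARD('d)" \<beta>]
    have "eventually (\<lambda>R::real. (real CARD('d) * ln (R+2) + \<beta>) / R < y' - \<alpha> \<and> R \<ge> Rs \<and> R \<ge> 1) at_top"
      by (intro eventually_conj eventually_ge_at_top) auto
    then show ?thesis
    proof eventually_elim
      case (elim R)
      show ?case
      proof (cases "sum f (shell C R) > 0")
        case False then show ?thesis using elim real by (simp add: ereal_mult_logE0)
      next
        case True
        have "sum f (shell C R) \<le> of_nat (card (shell C R)) * exp (\<alpha>*R + \<beta>)"
          by (rule sum_bounded_above) (use b elim in auto)
        also have "\<dots> \<le> (R+2)^CARD('d) * exp (\<alpha>*R + \<beta>)"
          using shell_card[of R C] elim by (intro mult_right_mono) auto
        finally have "ln (sum f (shell C R)) \<le> ln ((R+2)^CARD('d) * exp (\<alpha>*R + \<beta>))"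
          using True by simp
        also have "\<dots> = real CARD('d) * ln (R+2) + (\<alpha>*R + \<beta>)"
          using elim by (simp add: ln_mult ln_realpow)
        finally have "ln (sum f (shell C R)) / R \<le> (real CARD('d) * ln (R+2) + (\<alpha>*R + \<beta>)) / R"
          using elim by (simp add: divide_right_mono)
        also have "\<dots> = \<alpha> + (real CARD('d) * ln (R+2) + \<beta>) / R"
          using elim by (simp add: field_simps)
        also have "\<dots> < y'" using elim by simp
        finally show ?thesis using True elim real by (simp add: ereal_mult_logE)
      qed
    qed
  next
    case MInf with y show ?thesis by simp
  qed
qed

lemma T_low:
  assumes b: "\<And>R0. \<exists>i. idx_vec i \<in> C \<and> l1norm (idx_vec i) \<ge> R0 \<and> f i > 0 \<and> ln (f i) \<ge> \<theta> * l1norm (idx_vec i)"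
  shows "ereal \<theta> \<le> tau f C"
proof (rule ccontr)
  assume "\<not> ereal \<theta> \<le> tau f C"
  then have "tau f C < ereal \<theta>" by simp
  from Limsup_lessD[OF this[unfolded tau_eq]]
  obtain N where N: "\<And>R. R \<ge> N \<Longrightarrow> ereal (1/R) * logE (sum f (shell C R)) < ereal \<theta>"
    unfolding eventually_at_top_linorder by blast
  obtain i where i: "idx_vec i \<in> C" "l1norm (idx_vec i) \<ge> max N 1" "f i > 0" "ln (f i) \<ge> \<theta> * l1norm (idx_vec i)"
    using b by blast
  define R where "R = l1norm (idx_vec i)"
  have iS: "i \<in> shell C R" using i by (simp add: shell_def R_def)
  have R1: "R \<ge> 1" "R \<ge> N" using i by (auto simp: R_def)
  have S: "sum f (shell C R) \<ge> f i" by (rule le_sum_shell[OF iS])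
  with i have Sp: "sum f (shell C R) > 0" by simp
  have "\<theta> * R \<le> ln (f i)" using i by (simp add: R_def)
  also have "\<dots> \<le> ln (sum f (shell C R))" using S i by simp
  finally have "\<theta> \<le> ln (sum f (shell C R)) / R" using R1 by (simp add: field_simps)
  with N[OF R1(2)] Sp R1 show False by (simp add: ereal_mult_logE)
qed

lemma T_low_inv:
  assumes t: "ereal \<theta> < tau f C"
  shows "\<exists>R\<ge>max R0 1. \<exists>i\<in>shell C R. f i > 0 \<and> exp (\<theta>*R) \<le> f i * (R+2)^CARD('d)"
proof -
  have "\<not> tau f C \<le> ereal \<theta>" using t by simp
  then obtain y where y: "y > ereal \<theta>" "\<not> eventually (\<lambda>R. y > ereal (1/R) * logE (sum f (shell C R))) at_top"
    unfolding tau_eq Limsup_le_iff by blast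
  have "\<not> eventually (\<lambda>R. ereal \<theta> > ereal (1/R) * logE (sum f (shell C R))) at_top"
  proof
    assume "eventually (\<lambda>R. ereal \<theta> > ereal (1/R) * logE (sum f (shell C R))) at_top"
    then have "eventually (\<lambda>R. y > ereal (1/R) * logE (sum f (shell C R))) at_top"
      by eventually_elim (use y(1) in auto)
    with y(2) show False by simp
  qed
  then have "frequently (\<lambda>R. \<not> ereal \<theta> > ereal (1/R) * logE (sum f (shell C R))) at_top"
    by (simp add: frequently_def)
  then have "\<exists>R \<ge> max R0 1. ereal \<theta> \<le> ereal (1/R) * logE (sum f (shell C R))"
    unfolding frequently_at_top_real not_less by blast
  then obtain R where R: "R \<ge> max R0 1" "ereal \<theta> \<le> ereal (1/R) * logE (sum f (shell C R))"
    by blast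
  have Sp: "sum f (shell C R) > 0"
  proof (rule ccontr)
    assume "\<not> sum f (shell C R) > 0"
    with R show False by (simp add: ereal_mult_logE0)
  qed
  with R have "\<theta> \<le> ln (sum f (shell C R)) / R" by (simp add: ereal_mult_logE)
  then have "\<theta> * R \<le> ln (sum f (shell C R))" using R by (simp add: field_simps)
  then have e: "exp (\<theta> * R) \<le> sum f (shell C R)" using Sp by (metis exp_le_cancel_iff exp_ln)
  have ne: "shell C R \<noteq> {}" using Sp by auto
  have "Max (f ` shell C R) \<in> f ` shell C R" by (rule Max_in) (auto simp: shell_finite ne)
  then obtain i where i1: "i \<in> shell C R" "f i = Max (f ` shell C R)" by (metis imageE)
  have i2: "f k \<le> f i" if "k \<in> shell C R" for k
    unfolding i1(2) by (rule Max_ge) (use that shell_finite in auto)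
  note i = i1(1) i2
  have "sum f (shell C R) \<le> of_nat (card (shell C R)) * f i"
    by (rule sum_bounded_above) (use i in auto)
  also have "\<dots> \<le> (R+2)^CARD('d) * f i"
    using shell_card[of R C] R nonneg[of i] by (intro mult_right_mono) auto
  finally have "exp (\<theta> * R) \<le> f i * (R+2)^CARD('d)" using e by (simp add: mult.commute)
  moreover have "f i > 0"
  proof (rule ccontr)
    assume "\<not> f i > 0"
    then have "f i = 0" using nonneg[of i] by simp
    then have "sum f (shell C R) \<le> 0" using \<open>sum f (shell C R) \<le> of_nat (card (shell C R)) * f i\<close> by simp
    with Sp show False by simp
  qed
  ultimately show ?thesis using R i by blast
qed

lemma T_up_inv:
  assumes t: "tau f C < ereal \<theta>"
  shows "\<exists>R0. \<forall>R\<ge>R0. \<forall>i\<in>shell C R. f i \<le> exp (\<theta>*R)"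
proof -
  from Limsup_lessD[OF t[unfolded tau_eq]]
  obtain N where N: "\<And>R. R \<ge> N \<Longrightarrow> ereal (1/R) * logE (sum f (shell C R)) < ereal \<theta>"
    unfolding eventually_at_top_linorder by blast
  show ?thesis
  proof (intro exI[of _ "max N 1"] allI impI ballI)
    fix R i assume R: "max N 1 \<le> R" and i: "i \<in> shell C R"
    show "f i \<le> exp (\<theta>*R)"
    proof (cases "f i > 0")
      case False then show ?thesis using nonneg[of i] by (metis exp_gt_zero less_le_not_le nle_le order.trans)
    next
      case True
      have S: "f i \<le> sum f (shell C R)" by (rule le_sum_shell[OF i])
      with True have Sp: "sum f (shell C R) > 0" by simp
      from N[of R] R Sp have "ln (sum f (shell C R)) / R < \<theta>" by (simp add: ereal_mult_logE)
      then have "ln (sum f (shell C R)) < \<theta> * R" using R by (simp add: field_simps)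
      then have "sum f (shell C R) < exp (\<theta>*R)" using Sp by (metis exp_less_mono exp_ln)
      with S show ?thesis by simp
    qed
  qed
qed


lemma tau_minf_empty:
  assumes "\<And>i. idx_vec i \<notin> C" shows "tau f C = -\<infinity>"
proof -
  have le: "tau f C \<le> ereal \<alpha>" for \<alpha>
    by (rule T_up[where Rs=0 and \<beta>=0]) (use assms in \<open>auto simp: shell_def\<close>)
  show ?thesis
  proof (cases "tau f C")
    case (real r) with le[of "r-1"] show ?thesis by simp
  next
    case PInf with le[of 0] show ?thesis by simp
  qed simp
qed

end

lemma emult_le_iff: "l > 0 \<Longrightarrow> ereal l * a \<le> ereal l * b \<longleftrightarrow> a \<le> b"
  by (simp add: ereal_mult_le_mult_iff)

lemma emult_less_iff: "l > 0 \<Longrightarrow> ereal l * a < ereal l * b \<longleftrightarrow> a < b"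
  by (meson emult_le_iff not_le)

lemma emult_inv: "l > 0 \<Longrightarrow> ereal l * (ereal (1/l) * c) = c"
proof -
  assume l: "l > 0"
  have "ereal l * (ereal (1/l) * c) = (ereal l * ereal (1/l)) * c" by (rule mult.assoc[symmetric])
  also have "ereal l * ereal (1/l) = ereal 1" using l by simp
  finally show ?thesis by simp
qed

definition cone_at :: "real^'d \<Rightarrow> real \<Rightarrow> (real^'d) set" where
  "cone_at x \<epsilon> = {w. \<exists>lam>0. l1norm (w - lam *\<^sub>R x) < \<epsilon> * lam}"

lemma open_l1ball: "open {w. l1norm (w - c) < r}"
  by (rule open_Collect_less) (auto simp: l1norm_def intro!: continuous_intros)

lemma open_cone_at: "open_cone (cone_at x \<epsilon>)"
  unfolding open_cone_def
proof safe
  have "cone_at x \<epsilon> = (\<Union>lam\<in>{0<..}. {w. l1norm (w - lam *\<^sub>R x) < \<epsilon> * lam})"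
    by (auto simp: cone_at_def)
  then show "open (cone_at x \<epsilon>)" by (auto intro!: open_UN open_l1ball)
next
  fix y and t :: real assume "y \<in> cone_at x \<epsilon>" "t > 0"
  then obtain lam where l: "lam > 0" "l1norm (y - lam *\<^sub>R x) < \<epsilon> * lam" by (auto simp: cone_at_def)
  have "l1norm (t *\<^sub>R y - (t*lam) *\<^sub>R x) = t * l1norm (y - lam *\<^sub>R x)"
    using l1norm_scale[of t "y - lam *\<^sub>R x"] \<open>t>0\<close> by (simp add: algebra_simps)
  also have "\<dots> < \<epsilon> * (t * lam)" using l \<open>t>0\<close> by simp
  finally have "l1norm (t *\<^sub>R y - (t*lam) *\<^sub>R x) < \<epsilon> * (t * lam)" .
  moreover have "t * lam > 0" using l \<open>t>0\<close> by simp
  ultimately show "t *\<^sub>R y \<in> cone_at x \<epsilon>" unfolding cone_at_def by blast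
qed

lemma in_cone_at: "\<epsilon> > 0 \<Longrightarrow> x \<in> cone_at x \<epsilon>"
  unfolding cone_at_def by (rule CollectI, rule exI[of _ 1]) simp

lemma open_cone_ball:
  assumes "open_cone C" "z \<in> C"
  shows "\<exists>r>0. \<forall>w lam. lam > 0 \<longrightarrow> l1norm (w - lam *\<^sub>R z) < lam * r \<longrightarrow> w \<in> C"
proof -
  from assms obtain r where r: "r > 0" "ball z r \<subseteq> C" unfolding open_cone_def using open_contains_ball by blast
  show ?thesis
  proof (intro exI[of _ r] conjI allI impI r(1))
    fix w and lam :: real assume l: "lam > 0" "l1norm (w - lam *\<^sub>R z) < lam * r"
    have "l1norm ((1/lam) *\<^sub>R w - z) = (1/lam) * l1norm (w - lam *\<^sub>R z)"
      using l1norm_scale[of "1/lam" "w - lam *\<^sub>R z"] l by (simp add: algebra_simps)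
    also have "\<dots> < r" using l by (simp add: field_simps)
    finally have "dist z ((1/lam) *\<^sub>R w) < r"
      using norm_le_l1norm[of "(1/lam) *\<^sub>R w - z"] by (simp add: dist_norm norm_minus_commute)
    then have "(1/lam) *\<^sub>R w \<in> C" using r by auto
    then have "lam *\<^sub>R ((1/lam) *\<^sub>R w) \<in> C" using assms(1) l unfolding open_cone_def by blast
    then show "w \<in> C" using l by simp
  qed
qed

lemma box_eq: "{i::nat^'d. \<forall>j. i$j \<le> B} = vec_lambda ` (PiE UNIV (\<lambda>_. {..B}))"
proof
  show "{i::nat^'d. \<forall>j. i$j \<le> B} \<subseteq> vec_lambda ` (PiE UNIV (\<lambda>_. {..B}))" by (rule box_sub)
  show "vec_lambda ` (PiE UNIV (\<lambda>_. {..B})) \<subseteq> {i::nat^'d. \<forall>j. i$j \<le> B}" by auto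
qed

lemma exp_l1_prod: "exp (- r * l1norm (idx_vec (i::nat^'d))) = (\<Prod>j\<in>UNIV. exp (-r) ^ (i$j))"
  by (simp add: l1norm_idx sum_distrib_left exp_sum exp_of_nat_mult[symmetric] mult.commute)

lemma box_sum_bound:
  assumes r: "r > 0"
  shows "(\<Sum>i\<in>{i::nat^'d. \<forall>j. i$j \<le> B}. exp (- r * l1norm (idx_vec i))) \<le> (1 / (1 - exp (-r)))^CARD('d)"
proof -
  define q where "q = exp (-r)"
  have q: "0 < q" "q < 1" using r by (auto simp: q_def)
  have "(\<Sum>i\<in>{i::nat^'d. \<forall>j. i$j \<le> B}. exp (- r * l1norm (idx_vec i)))
      = (\<Sum>i\<in>vec_lambda ` (PiE (UNIV::'d set) (\<lambda>_. {..B})). (\<Prod>j\<in>UNIV. q ^ (i$j)))"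
    by (simp only: box_eq exp_l1_prod q_def)
  also have "\<dots> = (\<Sum>g\<in>PiE (UNIV::'d set) (\<lambda>_. {..B}). (\<Prod>j\<in>UNIV. q ^ (g j)))"
    by (subst sum.reindex) (auto simp: inj_on_def vec_lambda_inject)
  also have "\<dots> = (\<Prod>j\<in>(UNIV::'d set). \<Sum>k\<in>{..B}. q ^ k)"
    by (rule prod_sum_PiE[symmetric]) auto
  also have "\<dots> \<le> (\<Prod>j\<in>(UNIV::'d set). 1 / (1 - q))"
  proof (rule prod_mono)
    fix j :: 'd
    have "(\<Sum>k\<in>{..B}. q ^ k) = (\<Sum>k<Suc B. q ^ k)" by (simp add: lessThan_Suc_atMost)
    also have "\<dots> = (1 - q ^ Suc B) / (1 - q)" using q by (simp only: sum_gp_strict) simp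
    also have "\<dots> \<le> 1 / (1 - q)" using q by (intro divide_right_mono) auto
    finally show "0 \<le> (\<Sum>k\<in>{..B}. q ^ k) \<and> (\<Sum>k\<in>{..B}. q ^ k) \<le> 1 / (1 - q)"
      using q by (auto intro: sum_nonneg)
  qed
  also have "\<dots> = (1 / (1 - q))^CARD('d)" by simp
  finally show ?thesis by (simp add: q_def)
qed

lemma summable_exp_l1:
  assumes r: "r > 0"
  shows "(\<lambda>i::nat^'d. exp (- r * l1norm (idx_vec i))) summable_on UNIV"
proof (rule nonneg_bdd_above_summable_on)
  show "bdd_above (sum (\<lambda>i::nat^'d. exp (- r * l1norm (idx_vec i))) ` {F. F \<subseteq> UNIV \<and> finite F})"
  proof (rule bdd_aboveI2)
    fix F :: "(nat^'d) set" assume "F \<in> {F. F \<subseteq> UNIV \<and> finite F}"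
    then have F: "finite F" by simp
    define B where "B = Max (insert 0 ((\<lambda>i. Max (range (\<lambda>j. i$j))) ` F))"
    have sub: "F \<subseteq> {i::nat^'d. \<forall>j. i$j \<le> B}"
    proof clarsimp
      fix i j assume "i \<in> F"
      have "i$j \<le> Max (range (\<lambda>j. i$j))" by (rule Max_ge) auto
      also have "\<dots> \<le> B" unfolding B_def using F \<open>i\<in>F\<close> by (intro Max_ge) auto
      finally show "i$j \<le> B" .
    qed
    have "sum (\<lambda>i. exp (- r * l1norm (idx_vec i))) F \<le> (\<Sum>i\<in>{i::nat^'d. \<forall>j. i$j \<le> B}. exp (- r * l1norm (idx_vec i)))"
      by (rule sum_mono2[OF box_finite sub]) auto
    also have "\<dots> \<le> (1 / (1 - exp (-r)))^CARD('d)" by (rule box_sum_bound[OF r])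
    finally show "sum (\<lambda>i. exp (- r * l1norm (idx_vec i))) F \<le> (1 / (1 - exp (-r)))^CARD('d)" .
  qed
qed auto

definition smplx :: "(real^'d) set" where
  "smplx = {y. (\<forall>j. y$j \<ge> 0) \<and> l1norm y = 1}"

lemma continuous_on_l1norm_UNIV: "continuous_on UNIV l1norm"
  by (rule continuous_l1norm)

lemma compact_smplx: "compact smplx"
proof -
  have eq: "smplx = (\<Inter>j. {y::real^'d. 0 \<le> y$j}) \<inter> {y. l1norm y = 1}"
    by (auto simp: smplx_def)
  have c1: "closed {y::real^'d. 0 \<le> y$j}" for j
    by (rule closed_Collect_le) (auto intro!: continuous_intros)
  have c2: "closed {y::real^'d. l1norm y = 1}"
    by (rule closed_Collect_eq) (auto intro!: continuous_intros continuous_on_l1norm_UNIV)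
  have cl: "closed smplx" unfolding eq using c1 c2 by (intro closed_Int closed_INT) auto
  have "bounded smplx" unfolding bounded_iff
    by (rule exI[of _ 1]) (auto simp: smplx_def intro: order.trans[OF norm_le_l1norm])
  with cl show ?thesis by (simp add: compact_eq_bounded_closed)
qed

context ps begin

abbreviation psi where "psi \<equiv> indicatrice f"

lemma psi0: "psi 0 = 0" by (simp add: indicatrice_def)

lemma psi_nz: "x \<noteq> 0 \<Longrightarrow> psi x = ereal (l1norm x) * (INF C\<in>{C. open_cone C \<and> x \<in> C}. tau f C)"
  by (simp add: indicatrice_def)

lemma l1pos: "x \<noteq> 0 \<Longrightarrow> l1norm x > 0"
  using l1norm_nonneg[of x] l1norm_eq0[of x] by linarith

lemma psi_le_tau: "x \<noteq> 0 \<Longrightarrow> open_cone C \<Longrightarrow> x \<in> C \<Longrightarrow> psi x \<le> ereal (l1norm x) * tau f C"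
  unfolding psi_nz by (rule ereal_mult_left_mono) (auto intro: INF_lower simp: l1norm_nonneg)

lemma psi_lt_tau:
  assumes "x \<noteq> 0" "psi x < c"
  shows "\<exists>C. open_cone C \<and> x \<in> C \<and> ereal (l1norm x) * tau f C < c"
proof -
  have l: "l1norm x > 0" by (rule l1pos[OF assms(1)])
  have "ereal (l1norm x) * (INF C\<in>{C. open_cone C \<and> x \<in> C}. tau f C) < ereal (l1norm x) * (ereal (1/l1norm x) * c)"
    using assms psi_nz emult_inv[OF l] by simp
  then have "(INF C\<in>{C. open_cone C \<and> x \<in> C}. tau f C) < ereal (1/l1norm x) * c"
    using emult_less_iff[OF l] by blast
  then obtain C where C: "open_cone C" "x \<in> C" "tau f C < ereal (1/l1norm x) * c"
    unfolding INF_less_iff by blast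
  then have "ereal (l1norm x) * tau f C < c" using emult_less_iff[OF l] emult_inv[OF l] by metis
  with C show ?thesis by blast
qed

lemma psi_ge:
  assumes "x \<noteq> 0" "\<And>C. open_cone C \<Longrightarrow> x \<in> C \<Longrightarrow> ereal t \<le> tau f C"
  shows "ereal (l1norm x * t) \<le> psi x"
proof -
  have l: "l1norm x > 0" by (rule l1pos[OF assms(1)])
  have "ereal t \<le> (INF C\<in>{C. open_cone C \<and> x \<in> C}. tau f C)"
    using assms(2) by (auto intro: INF_greatest)
  then have "ereal (l1norm x) * ereal t \<le> psi x" unfolding psi_nz[OF assms(1)]
    using emult_le_iff[OF l] by blast
  then show ?thesis by simp
qed

lemma psi_ge_inv:
  assumes "x \<noteq> 0" "ereal t \<le> psi x" "open_cone C" "x \<in> C"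
  shows "ereal (t / l1norm x) \<le> tau f C"
proof -
  have l: "l1norm x > 0" by (rule l1pos[OF assms(1)])
  have "ereal (l1norm x) * ereal (t / l1norm x) \<le> ereal (l1norm x) * tau f C"
    using assms(2) psi_le_tau[OF assms(1,3,4)] l by simp
  then show ?thesis using emult_le_iff[OF l] by blast
qed

lemma psi_neg:
  assumes "x$j < 0" shows "psi x = -\<infinity>"
proof -
  have x0: "x \<noteq> 0" using assms by auto
  define C where "C = {w::real^'d. w$j < 0}"
  have oc: "open_cone C" unfolding open_cone_def C_def
    by (auto intro!: open_Collect_less continuous_intros simp: mult_pos_neg)
  have "\<And>i. idx_vec i \<notin> C" by (simp add: C_def idx_vec_def)
  then have "tau f C = -\<infinity>" by (rule tau_minf_empty)
  with psi_le_tau[OF x0 oc] assms l1pos[OF x0] show ?thesis by (simp add: C_def)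
qed

lemma psi_nonneg_dom: "psi x > -\<infinity> \<Longrightarrow> x$j \<ge> 0"
  using psi_neg[of x j] by force

lemma ereal_le_eps:
  assumes "\<And>e. 0 < e \<Longrightarrow> e < d \<Longrightarrow> x \<le> ereal (a + e * B)" "d > 0" "B \<ge> 0"
  shows "x \<le> ereal a"
proof (rule ccontr)
  assume "\<not> x \<le> ereal a"
  then have xa: "x > ereal a" by simp
  define e where "e = min (d/2) (1 / (B+1))"
  have e: "0 < e" "e < d" using assms by (auto simp: e_def)
  have eB: "e * B < 1" 
  proof -
    have "e * B \<le> (1/(B+1)) * B" using assms by (intro mult_right_mono) (auto simp: e_def)
    also have "\<dots> < 1" using assms by (simp add: field_simps)
    finally show ?thesis .
  qed
  show False
  proof (cases x)
    case (real r)
    define e' where "e' = min e ((r - a) / 2 / (B+1))"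
    have e': "0 < e'" "e' < d" using e xa real assms by (auto simp: e'_def)
    have "e' * B \<le> ((r - a) / 2 / (B+1)) * B" using assms e' by (intro mult_right_mono) (auto simp: e'_def)
    also have "\<dots> = (r - a) * (B / (2*(B+1)))" by (simp add: field_simps)
    also have "\<dots> < (r - a) * 1"
    proof (rule mult_strict_left_mono)
      show "B / (2*(B+1)) < 1" using assms by (simp add: field_simps)
      show "0 < r - a" using xa real by simp
    qed
    also have "\<dots> = r - a" by simp
    finally have "a + e' * B < r" by simp
    with assms(1)[OF e'] real show False by simp
  next
    case PInf with assms(1)[OF e] show False by simp
  next
    case MInf with xa show False by simp
  qed
qed

lemma inner_l1_bound:
  assumes "\<And>j. \<bar>V$j\<bar> \<le> K"
  shows "\<bar>inner w V\<bar> \<le> l1norm w * K"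
proof -
  have "\<bar>inner w V\<bar> = \<bar>\<Sum>j\<in>UNIV. w$j * V$j\<bar>" by (simp add: inner_vec_def)
  also have "\<dots> \<le> (\<Sum>j\<in>UNIV. \<bar>w$j * V$j\<bar>)" by (rule sum_abs)
  also have "\<dots> \<le> (\<Sum>j\<in>UNIV. \<bar>w$j\<bar> * K)"
    by (intro sum_mono) (simp add: abs_mult assms mult_left_mono)
  also have "\<dots> = l1norm w * K" by (simp add: l1norm_def sum_distrib_right)
  finally show ?thesis .
qed

lemma l1norm_tri3: "A = B + C \<Longrightarrow> l1norm B \<le> u \<Longrightarrow> l1norm C \<le> v \<Longrightarrow> l1norm A \<le> u + v"
  using l1norm_triangle[of B C] by simp

lemma l1norm_rev_tri: "\<bar>l1norm a - l1norm b\<bar> \<le> l1norm (a - b)"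
  using l1norm_triangle[of "a - b" b] l1norm_triangle[of "b - a" a] l1norm_minus[of a b] by simp

lemma norm_monom:
  assumes "\<forall>j. z$j \<noteq> 0"
  shows "norm (monom z i) = exp (inner (idx_vec i) (\<chi> j. ln (norm (z$j))))"
proof -
  have "norm (monom z i) = (\<Prod>j\<in>UNIV. norm (z$j) ^ (i$j))"
    by (simp add: monom_def prod_norm[symmetric] norm_power)
  also have "\<dots> = (\<Prod>j\<in>UNIV. exp (real (i$j) * ln (norm (z$j))))"
  proof (rule prod.cong[OF refl])
    fix j
    have "norm (z$j) > 0" using assms by simp
    then show "norm (z$j) ^ (i$j) = exp (real (i$j) * ln (norm (z$j)))"
      by (simp add: powr_realpow[symmetric] powr_def mult.commute)
  qed
  also have "\<dots> = exp (\<Sum>j\<in>UNIV. real (i$j) * ln (norm (z$j)))" by (simp add: exp_sum)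
  also have "\<dots> = exp (inner (idx_vec i) (\<chi> j. ln (norm (z$j))))"
    by (simp add: inner_vec_def idx_vec_def)
  finally show ?thesis .
qed

lemma term_le_infsum:
  assumes "g summable_on UNIV" "\<And>i. g i \<ge> (0::real)"
  shows "g i \<le> infsum g UNIV"
proof -
  have "infsum g {i} \<le> infsum g UNIV"
    by (rule infsum_mono_neutral) (use assms in auto)
  then show ?thesis by simp
qed

lemma A1:
  assumes z: "z \<in> abs_conv_domain f" "\<forall>j. z$j \<noteq> 0"
  shows "psi y \<le> ereal (- inner y (\<chi> j. ln (norm (z$j))))"
proof (cases "y = 0")
  case True then show ?thesis by (simp add: psi0)
next
  case False
  define V where "V = (\<chi> j. ln (norm (z$j)))"
  define Kv where "Kv = (\<Sum>j\<in>UNIV. \<bar>V$j\<bar>)"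
  have Kv: "\<bar>V$j\<bar> \<le> Kv" for j unfolding Kv_def by (rule member_le_sum) auto
  have Kv0: "Kv \<ge> 0" unfolding Kv_def by (simp add: sum_nonneg)
  define g where "g i = f i * norm (monom z i)" for i
  have gs: "g summable_on UNIV" using z(1) by (simp add: abs_conv_domain_def g_def[abs_def])
  define M where "M = infsum g UNIV + 1"
  have gM: "g i \<le> M - 1" for i
    using term_le_infsum[OF gs, of i] by (simp add: M_def g_def nonneg)
  have M1: "M \<ge> 1" using gM[of 0] mult_nonneg_nonneg[OF nonneg[of 0] norm_ge_zero[of "monom z 0"]] by (simp add: g_def)
  have fi: "f i \<le> M * exp (- inner (idx_vec i) V)" for i
  proof -
    have "f i * exp (inner (idx_vec i) V) \<le> M"
      using gM[of i] norm_monom[OF z(2), of i] by (simp add: g_def V_def)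
    then show ?thesis by (simp add: exp_minus field_simps)
  qed
  define Y where "Y = l1norm y"
  have Y: "Y > 0" using l1pos[OF False] by (simp add: Y_def)
  define gg where "gg = - inner y V / Y"
  define K2 where "K2 = 2 * (\<bar>gg\<bar> + Kv) / Y"
  have K2: "K2 \<ge> 0" using Y Kv0 by (simp add: K2_def)
  have main: "psi y \<le> ereal (- inner y V + \<epsilon> * (Y * K2))" if e: "0 < \<epsilon>" "\<epsilon> < Y/2" for \<epsilon>
  proof -
    have tb: "tau f (cone_at y \<epsilon>) \<le> ereal (gg + \<epsilon> * K2)"
    proof (rule T_up[where Rs=1 and \<beta>="\<bar>gg\<bar> + \<epsilon> * K2 + ln M"])
      fix R i assume R: "1 \<le> R" and iS: "i \<in> shell (cone_at y \<epsilon>) R"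
      then obtain lam where lam: "lam > 0" "l1norm (idx_vec i - lam *\<^sub>R y) < \<epsilon> * lam"
        by (auto simp: shell_def cone_at_def)
      have ir: "R \<le> l1norm (idx_vec i)" "l1norm (idx_vec i) \<le> R + 1" using iS by (auto simp: shell_def)
      have d1: "\<bar>l1norm (idx_vec i) - lam * Y\<bar> < \<epsilon> * lam"
        using l1norm_rev_tri[of "idx_vec i" "lam *\<^sub>R y"] lam l1norm_scale[of lam y] by (simp add: Y_def)
      have lamb: "lam \<le> 2 * (R+1) / Y"
      proof -
        have "lam * (Y - \<epsilon>) < R + 1" using d1 ir by (simp add: algebra_simps)
        moreover have "Y / 2 \<le> Y - \<epsilon>" using e by simp
        ultimately have "lam * (Y/2) < R + 1" using lam by (smt (verit) mult_left_mono)
        then show ?thesis using Y by (simp add: field_simps)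
      qed
      have inn: "- inner (idx_vec i) V \<le> lam * Y * gg + \<epsilon> * lam * Kv"
      proof -
        have "inner (idx_vec i) V = lam * inner y V + inner (idx_vec i - lam *\<^sub>R y) V"
          by (simp add: inner_diff_left)
        moreover have "\<bar>inner (idx_vec i - lam *\<^sub>R y) V\<bar> \<le> l1norm (idx_vec i - lam *\<^sub>R y) * Kv"
          by (rule inner_l1_bound[OF Kv])
        moreover have "l1norm (idx_vec i - lam *\<^sub>R y) * Kv \<le> \<epsilon> * lam * Kv"
          using lam Kv0 by (intro mult_right_mono) auto
        moreover have "lam * Y * gg = - lam * inner y V" using Y by (simp add: gg_def)
        ultimately show ?thesis by linarith
      qed
      have "lam * Y * gg \<le> R * gg + \<bar>gg\<bar> * (1 + \<epsilon> * lam)"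
      proof -
        have "\<bar>lam * Y - R\<bar> \<le> 1 + \<epsilon> * lam" using d1 ir by linarith
        then have "\<bar>(lam * Y - R) * gg\<bar> \<le> (1 + \<epsilon> * lam) * \<bar>gg\<bar>"
          by (simp add: abs_mult mult_right_mono)
        then show ?thesis by (simp add: algebra_simps abs_le_iff)
      qed
      with inn have "- inner (idx_vec i) V \<le> R * gg + \<bar>gg\<bar> + \<epsilon> * lam * (\<bar>gg\<bar> + Kv)"
        by (simp add: algebra_simps)
      also have "\<epsilon> * lam * (\<bar>gg\<bar> + Kv) \<le> \<epsilon> * (2 * (R+1) / Y) * (\<bar>gg\<bar> + Kv)"
        using lamb e Kv0 by (intro mult_right_mono mult_left_mono) auto
      also have "\<epsilon> * (2 * (R+1) / Y) * (\<bar>gg\<bar> + Kv) = (R + 1) * (\<epsilon> * K2)"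
        by (simp add: K2_def field_simps)
      finally have "- inner (idx_vec i) V \<le> (gg + \<epsilon> * K2) * R + (\<bar>gg\<bar> + \<epsilon> * K2)"
        by (simp add: algebra_simps)
      then have "M * exp (- inner (idx_vec i) V) \<le> exp (ln M) * exp ((gg + \<epsilon> * K2) * R + (\<bar>gg\<bar> + \<epsilon> * K2))"
        using M1 by simp
      also have "\<dots> = exp ((gg + \<epsilon> * K2) * R + (\<bar>gg\<bar> + \<epsilon> * K2 + ln M))"
        by (simp add: exp_add[symmetric] algebra_simps)
      finally show "f i \<le> exp ((gg + \<epsilon> * K2) * R + (\<bar>gg\<bar> + \<epsilon> * K2 + ln M))"
        using fi[of i] by linarith
    qed
    have "psi y \<le> ereal Y * tau f (cone_at y \<epsilon>)"
      unfolding Y_def by (rule psi_le_tau[OF False open_cone_at in_cone_at[OF e(1)]])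
    also have "\<dots> \<le> ereal Y * ereal (gg + \<epsilon> * K2)"
      using tb Y by (intro ereal_mult_left_mono) auto
    also have "\<dots> = ereal (- inner y V + \<epsilon> * (Y * K2))" using Y by (simp add: gg_def field_simps)
    finally show ?thesis .
  qed
  have "psi y \<le> ereal (- inner y V)"
    by (rule ereal_le_eps[OF main, of "Y/2"]) (use Y K2 in auto)
  then show ?thesis by (simp add: V_def)
qed

lemma psi_homog:
  assumes "t > 0" shows "psi (t *\<^sub>R x) = ereal t * psi x"
proof (cases "x = 0")
  case True then show ?thesis by (simp add: psi0)
next
  case False
  then have tx: "t *\<^sub>R x \<noteq> 0" using assms by simp
  have "{C. open_cone C \<and> t *\<^sub>R x \<in> C} = {C. open_cone C \<and> x \<in> C}"
  proof (safe)
    fix C assume "open_cone C" "t *\<^sub>R x \<in> C"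
    then have hc: "\<forall>y\<in>C. \<forall>s>0. s *\<^sub>R y \<in> C" "t *\<^sub>R x \<in> C" unfolding open_cone_def by auto
    have "1/t > 0" using assms by simp
    have "(1/t) *\<^sub>R (t *\<^sub>R x) \<in> C" using hc(1)[rule_format, OF hc(2) \<open>1/t > 0\<close>] .
    then show "x \<in> C" using assms by simp
  next
    fix C assume "open_cone C" "x \<in> C"
    then show "t *\<^sub>R x \<in> C" using assms unfolding open_cone_def by simp
  qed
  then show ?thesis using False tx assms
    by (simp add: psi_nz l1norm_scale mult.assoc[symmetric] times_ereal.simps(1)[symmetric] del: times_ereal.simps)
qed


abbreviation Sd where "Sd \<equiv> (smplx :: (real^'d) set)"

lemma B1:
  assumes d: "\<delta> > 0" and h: "\<And>y. y \<in> Sd \<Longrightarrow> psi y \<le> ereal (- inner y u - \<delta>)"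
  shows "(\<chi> j. complex_of_real (exp (u$j))) \<in> abs_conv_domain f"
proof -
  have ex: "\<forall>y\<in>Sd. \<exists>C R. open_cone C \<and> y \<in> C \<and>
      (\<forall>R'\<ge>R. \<forall>i\<in>shell C R'. f i \<le> exp ((- inner y u - \<delta>/2) * R'))"
  proof
    fix y :: "real^'d" assume y: "y \<in> Sd"
    then have y0: "y \<noteq> 0" and l1: "l1norm y = 1" by (auto simp: smplx_def)
    have "psi y < ereal (- inner y u - \<delta>/2)"
    proof -
      have "ereal (- inner y u - \<delta>) < ereal (- inner y u - \<delta>/2)" using d by simp
      then show ?thesis using h[OF y] by (rule order.strict_trans1[rotated])
    qed
    from psi_lt_tau[OF y0 this] obtain C where C: "open_cone C" "y \<in> C"
      "ereal (l1norm y) * tau f C < ereal (- inner y u - \<delta>/2)" by blast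
    then have "tau f C < ereal (- inner y u - \<delta>/2)" using l1 by (simp add: one_ereal_def[symmetric])
    from T_up_inv[OF this] obtain R where "\<forall>R'\<ge>R. \<forall>i\<in>shell C R'. f i \<le> exp ((- inner y u - \<delta>/2) * R')"
      by blast
    with C show "\<exists>C R. open_cone C \<and> y \<in> C \<and> (\<forall>R'\<ge>R. \<forall>i\<in>shell C R'. f i \<le> exp ((- inner y u - \<delta>/2) * R'))"
      by blast
  qed
  then obtain Cf Rf where CR: "\<And>y. y\<in>Sd \<Longrightarrow> open_cone (Cf y) \<and> y \<in> Cf y \<and>
      (\<forall>R'\<ge>Rf y. \<forall>i\<in>shell (Cf y) R'. f i \<le> exp ((- inner y u - \<delta>/2) * R'))"
    by metis
  define Q where "Q y = {w. inner w u < (inner y u + \<delta>/4) * l1norm w}" for y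
  have Qo: "open (Q y)" for y unfolding Q_def
    by (rule open_Collect_less) (auto intro!: continuous_intros continuous_on_l1norm_UNIV)
  define Op where "Op y = Cf y \<inter> Q y" for y
  have cov: "Sd \<subseteq> (\<Union>y\<in>Sd. Op y)"
  proof
    fix y assume y: "y \<in> Sd"
    then have "y \<in> Q y" using d by (simp add: Q_def smplx_def)
    with CR[OF y] y show "y \<in> (\<Union>y\<in>Sd. Op y)" by (auto simp: Op_def)
  qed
  have opn: "open (Op y)" if "y \<in> Sd" for y
    using CR[OF that] Qo[of y] by (auto simp: Op_def open_cone_def)
  obtain Y where Y: "Y \<subseteq> Sd" "finite Y" "Sd \<subseteq> (\<Union>y\<in>Y. Op y)"
    by (rule compactE_image[OF compact_smplx opn cov]) auto
  define Rm where "Rm = Max (insert 1 (Rf ` Y))"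
  have Rm: "Rm \<ge> 1" "\<And>y. y\<in>Y \<Longrightarrow> Rf y \<le> Rm" using Y(2) by (auto simp: Rm_def)
  define L where "L = {i::nat^'d. l1norm (idx_vec i) \<le> Rm}"
  define hh where "hh i = f i * exp (inner (idx_vec i) u)" for i
  have hh0: "hh i \<ge> 0" for i by (simp add: hh_def nonneg)
  define B0 where "B0 = sum hh L"
  have B00: "B0 \<ge> 0" unfolding B0_def by (rule sum_nonneg) (simp add: hh0)
  define K where "K = B0 * exp (\<delta>/4 * Rm) + 1"
  have bound: "hh i \<le> K * exp (- (\<delta>/4) * l1norm (idx_vec i))" for i
  proof (cases "l1norm (idx_vec i) \<le> Rm")
    case True
    have "hh i \<le> B0" unfolding B0_def
      by (rule member_le_sum) (use True hh0 lowset_finite in \<open>auto simp: L_def\<close>)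
    also have "\<dots> = B0 * exp (\<delta>/4 * Rm) * exp (- (\<delta>/4) * Rm)" by (simp add: exp_minus)
    also have "\<dots> \<le> B0 * exp (\<delta>/4 * Rm) * exp (- (\<delta>/4) * l1norm (idx_vec i))"
      using True d B00 by (intro mult_left_mono) auto
    also have "\<dots> \<le> K * exp (- (\<delta>/4) * l1norm (idx_vec i))"
      by (intro mult_right_mono) (auto simp: K_def)
    finally show ?thesis .
  next
    case False
    define n where "n = l1norm (idx_vec i)"
    have n: "n > Rm" "n > 0" using False Rm by (auto simp: n_def)
    define w where "w = (1/n) *\<^sub>R idx_vec i"
    have "w \<in> Sd" using n
      by (auto simp: smplx_def w_def idx_vec_nonneg l1norm_scale n_def)
    then obtain y where y: "y \<in> Y" "w \<in> Op y" using Y(3) by blast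
    have ys: "y \<in> Sd" using y Y(1) by auto
    have iw: "idx_vec i = n *\<^sub>R w" using n by (simp add: w_def)
    have "idx_vec i \<in> Cf y" using CR[OF ys] y(2) n iw by (auto simp: Op_def open_cone_def)
    then have ish: "i \<in> shell (Cf y) n" by (simp add: shell_def n_def)
    have fi: "f i \<le> exp ((- inner y u - \<delta>/2) * n)"
      using CR[OF ys] Rm(2)[OF y(1)] n ish by auto
    have "l1norm w = 1" using \<open>w \<in> Sd\<close> by (simp add: smplx_def)
    then have "inner w u < inner y u + \<delta>/4" using y(2) by (simp add: Op_def Q_def)
    then have "inner (idx_vec i) u < n * (inner y u + \<delta>/4)" using n iw by simp
    then have ei: "exp (inner (idx_vec i) u) \<le> exp (n * (inner y u + \<delta>/4))" by simp
    have "hh i \<le> exp ((- inner y u - \<delta>/2) * n) * exp (n * (inner y u + \<delta>/4))"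
      unfolding hh_def using fi ei nonneg[of i] by (intro mult_mono) auto
    also have "\<dots> = exp (- (\<delta>/4) * n)" by (simp add: exp_add[symmetric] algebra_simps)
    also have "\<dots> \<le> K * exp (- (\<delta>/4) * n)" using B00 by (simp add: K_def)
    finally show ?thesis by (simp add: n_def)
  qed
  define z where "z = (\<chi> j. complex_of_real (exp (u$j)))"
  have z0: "\<forall>j. z$j \<noteq> 0" by (simp add: z_def)
  have zv: "(\<chi> j. ln (norm (z$j))) = u" by (simp add: z_def vec_eq_iff)
  have nm: "f i * norm (monom z i) = hh i" for i
    using norm_monom[OF z0, of i] zv by (simp add: hh_def)
  have "hh summable_on UNIV"
  proof (rule summable_on_comparison_test)
    show "(\<lambda>i. K * exp (- (\<delta>/4) * l1norm (idx_vec i))) summable_on UNIV"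
      by (rule summable_on_cmult_right, rule summable_exp_l1) (use d in simp)
  qed (use bound hh0 in auto)
  then show ?thesis using nm by (simp add: abs_conv_domain_def z_def[symmetric])
qed



lemma LB:
  assumes x0: "x \<noteq> 0" and t: "ereal t \<le> psi x" and e: "\<epsilon> > 0"
  shows "\<exists>p lam. lam \<ge> Lam \<and> l1norm (idx_vec p - lam *\<^sub>R x) \<le> \<epsilon> * lam \<and> f p > 0 \<and> ln (f p) \<ge> lam * t - \<epsilon> * lam"
proof -
  define X where "X = l1norm x"
  have X: "X > 0" using l1pos[OF x0] by (simp add: X_def)
  define \<theta> where "\<theta> = t/X - \<epsilon>/(4*X)"
  define e1 where "e1 = min (X/2) (\<epsilon> / (4*(\<bar>\<theta>\<bar>+1)))"
  have e1: "e1 > 0" "e1 \<le> X/2" "e1 \<le> \<epsilon> / (4*(\<bar>\<theta>\<bar>+1))" 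
    using X e unfolding e1_def by (simp add: pos_add_strict, simp only: min.cobounded1, simp only: min.cobounded2)
  have e1t: "\<bar>\<theta>\<bar> * e1 \<le> \<epsilon>/4"
  proof -
    have "\<bar>\<theta>\<bar> * e1 \<le> (\<bar>\<theta>\<bar>+1) * e1" using e1 by (simp add: mult_right_mono)
    also have "\<dots> \<le> (\<bar>\<theta>\<bar>+1) * (\<epsilon> / (4*(\<bar>\<theta>\<bar>+1)))" using e1 by (intro mult_left_mono) auto
    also have "\<dots> = \<epsilon>/4" by (simp add: field_simps)
    finally show ?thesis .
  qed
  have e1e: "e1 \<le> \<epsilon>"
  proof -
    have "\<epsilon> / (4*(\<bar>\<theta>\<bar>+1)) \<le> \<epsilon>" using e by (simp add: field_simps)
    with e1 show ?thesis by linarith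
  qed
  have "ereal (t / X) \<le> tau f (cone_at x e1)"
    unfolding X_def by (rule psi_ge_inv[OF x0 t open_cone_at in_cone_at[OF e1(1)]])
  moreover have "\<theta> < t / X" using e X by (simp add: \<theta>_def)
  ultimately have tl: "ereal \<theta> < tau f (cone_at x e1)" by (meson ereal_less(2) less_ereal.simps(1) order.strict_trans2)
  have "\<epsilon>/(4*X) > 0" using e X by simp
  from ev_small[OF this, of "real CARD('d)" "\<bar>\<theta>\<bar>"]
  obtain R1 where R1: "\<And>R. R \<ge> R1 \<Longrightarrow> (real CARD('d) * ln (R+2) + \<bar>\<theta>\<bar>) / R < \<epsilon>/(4*X)"
    unfolding eventually_at_top_linorder by blast
  from T_low_inv[OF tl, of "max R1 (2*X*\<bar>Lam\<bar>)"]
  obtain R i where R: "R \<ge> max (max R1 (2*X*\<bar>Lam\<bar>)) 1" and iS: "i \<in> shell (cone_at x e1) R"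
    and fi: "f i > 0" and ex: "exp (\<theta>*R) \<le> f i * (R+2)^CARD('d)" by blast
  have Rp: "R \<ge> 1" "R \<ge> R1" "R \<ge> 2*X*\<bar>Lam\<bar>" using R by auto
  obtain lam where lam: "lam > 0" "l1norm (idx_vec i - lam *\<^sub>R x) < e1 * lam"
    using iS by (auto simp: shell_def cone_at_def)
  have ir: "R \<le> l1norm (idx_vec i)" "l1norm (idx_vec i) \<le> R + 1" using iS by (auto simp: shell_def)
  have d1: "\<bar>l1norm (idx_vec i) - lam * X\<bar> < e1 * lam"
    using l1norm_rev_tri[of "idx_vec i" "lam *\<^sub>R x"] lam l1norm_scale[of lam x] by (simp add: X_def)
  have d2: "\<bar>R - lam * X\<bar> \<le> 1 + e1 * lam" using d1 ir by linarith
  have "R \<le> lam * X + e1 * lam" using d1 ir by linarith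
  also have "\<dots> \<le> lam * X + (X/2) * lam" using e1 lam by (intro add_left_mono mult_right_mono) auto
  finally have R15: "R \<le> lam * X + (X/2) * lam" .
  have XL: "X * lam > 0" using X lam by simp
  have "lam * X + (X/2) * lam = (3/2) * (X * lam)" "2 * X * lam = 2 * (X * lam)" by (simp_all add: algebra_simps)
  then have Rl: "R \<le> 2 * X * lam" using R15 XL by linarith
  have lamL: "lam \<ge> Lam"
  proof -
    have "2*X*\<bar>Lam\<bar> \<le> 2 * X * lam" using Rp Rl by linarith
    then have "\<bar>Lam\<bar> \<le> lam" using X by simp
    then show ?thesis by linarith
  qed
  have l1: "\<theta> * R \<le> ln (f i) + real CARD('d) * ln (R+2)"
  proof -
    have "\<theta> * R = ln (exp (\<theta> * R))" by simp
    also have "\<dots> \<le> ln (f i * (R+2)^CARD('d))" using ex by (subst ln_le_cancel_iff) (use fi Rp in auto)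
    also have "\<dots> = ln (f i) + real CARD('d) * ln (R+2)" using fi Rp by (simp add: ln_mult ln_realpow)
    finally show ?thesis .
  qed
  have a: "\<theta> * R \<ge> \<theta> * (lam * X) - \<bar>\<theta>\<bar> * (1 + e1 * lam)"
  proof -
    have "\<bar>\<theta> * (R - lam * X)\<bar> \<le> \<bar>\<theta>\<bar> * (1 + e1 * lam)"
      unfolding abs_mult using d2 by (intro mult_left_mono) auto
    then show ?thesis by (simp add: algebra_simps abs_le_iff)
  qed
  have c: "\<theta> * (lam * X) = lam * t - lam * \<epsilon> / 4" using X by (simp add: \<theta>_def field_simps)
  have ee: "real CARD('d) * ln (R+2) + \<bar>\<theta>\<bar> \<le> \<epsilon> * lam / 2"
  proof -
    have "real CARD('d) * ln (R+2) + \<bar>\<theta>\<bar> < \<epsilon>/(4*X) * R" using R1[OF Rp(2)] Rp by (simp add: field_simps)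
    also have "\<dots> \<le> \<epsilon>/(4*X) * (2 * X * lam)" using Rl e X by (intro mult_left_mono) auto
    also have "\<dots> = \<epsilon> * lam / 2" using X by (simp add: field_simps)
    finally show ?thesis by simp
  qed
  have e1l: "\<bar>\<theta>\<bar> * (e1 * lam) \<le> \<epsilon>/4 * lam" using e1t lam by (simp add: mult.assoc[symmetric] mult_right_mono)
  have "ln (f i) \<ge> lam * t - \<epsilon> * lam"
    using l1 a c ee e1l by (simp add: algebra_simps)
  moreover have "l1norm (idx_vec i - lam *\<^sub>R x) \<le> \<epsilon> * lam"
    using lam e1e by (smt (verit) mult_right_mono)
  ultimately show ?thesis using lamL fi by blast
qed

end

locale psCG = ps f for f :: "nat^'d \<Rightarrow> real" +
  fixes a b c :: real
  assumes a: "a > 0" and b: "b > 0" and c: "c > 0"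
    and CG: "\<And>x y. nu_ball f (x + y) a \<ge> c * nu_ball f x b * nu_ball f y b"
begin

definition Lc :: real where "Lc = real ((nat \<lfloor>2*a\<rfloor> + 1)^CARD('d))"
definition kap :: real where "kap = min 1 (c / Lc)"

lemma Lc_pos: "Lc \<ge> 1" unfolding Lc_def
  by (metis One_nat_def Suc_eq_plus1 Suc_le_eq of_nat_1 of_nat_le_iff one_le_power zero_less_Suc)

lemma kap: "kap > 0" "kap \<le> 1" "ln kap \<le> 0"
  using Lc_pos c by (auto simp: kap_def)

lemma nu_ge: "f p \<le> nu_ball f (idx_vec p) b"
  unfolding nu_ball_def
  by (rule member_le_sum) (use l1ball_lattice_card[of b "idx_vec p"] b nonneg in auto)

lemma CGL:
  assumes p: "f p > 0" and q: "f q > 0"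
  shows "\<exists>w. l1norm (idx_vec w - (idx_vec p + idx_vec q)) \<le> a \<and> f w \<ge> kap * f p * f q"
proof -
  define z where "z = idx_vec p + idx_vec q"
  define S where "S = {i::nat^'d. l1norm (idx_vec i - z) \<le> a}"
  have S: "finite S" "card S \<le> (nat \<lfloor>2*a\<rfloor> + 1)^CARD('d)"
    using l1ball_lattice_card[of a z] a by (auto simp: S_def)
  have "c * f p * f q \<le> c * nu_ball f (idx_vec p) b * nu_ball f (idx_vec q) b"
    using nu_ge[of p] nu_ge[of q] c p q by (intro mult_mono mult_left_mono) (auto simp: nu_ball_def intro!: sum_nonneg nonneg)
  also have "\<dots> \<le> sum f S" using CG[of "idx_vec p" "idx_vec q"] by (simp add: nu_ball_def S_def z_def)
  finally have sumS: "c * f p * f q \<le> sum f S" .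
  have pos: "c * f p * f q > 0" using c p q by simp
  then have ne: "S \<noteq> {}" using sumS by auto
  have "Max (f ` S) \<in> f ` S" by (rule Max_in) (auto simp: S ne)
  then obtain w where w: "w \<in> S" "f w = Max (f ` S)" by (metis imageE)
  have "sum f S \<le> of_nat (card S) * f w"
    by (rule sum_bounded_above) (use w S in auto)
  also have "\<dots> \<le> Lc * f w"
  proof (rule mult_right_mono)
    show "real (card S) \<le> Lc" unfolding Lc_def using S(2) by (simp only: of_nat_le_iff)
  qed (use nonneg[of w] in simp)
  finally have "c * f p * f q \<le> Lc * f w" using sumS by linarith
  then have "c / Lc * (f p * f q) \<le> f w" using Lc_pos by (simp add: field_simps)
  moreover have "kap * (f p * f q) \<le> c / Lc * (f p * f q)"
    using p q by (intro mult_right_mono) (auto simp: kap_def)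
  ultimately have "kap * f p * f q \<le> f w" by (simp add: mult.assoc)
  with w show ?thesis by (auto simp: S_def z_def)
qed

lemma IT:
  assumes p: "f p > 0" and k: "k \<ge> 1"
  shows "\<exists>w. l1norm (idx_vec w - real k *\<^sub>R idx_vec p) \<le> (real k - 1) * a \<and> f w > 0 \<and>
             ln (f w) \<ge> real k * ln (f p) + (real k - 1) * ln kap"
  using k
proof (induction k rule: dec_induct)
  case base
  show ?case by (rule exI[of _ p]) (use p in simp)
next
  case (step k)
  then obtain w where w: "l1norm (idx_vec w - real k *\<^sub>R idx_vec p) \<le> (real k - 1) * a" "f w > 0"
    "ln (f w) \<ge> real k * ln (f p) + (real k - 1) * ln kap" by blast
  obtain w' where w': "l1norm (idx_vec w' - (idx_vec w + idx_vec p)) \<le> a" "f w' \<ge> kap * f w * f p"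
    using CGL[OF w(2) p] by blast
  have fw': "f w' > 0" using w'(2) kap w(2) p by (smt (verit) mult_pos_pos)
  have "ln (f w') \<ge> ln (kap * f w * f p)" using ln_le_cancel_iff[of "kap * f w * f p" "f w'"] w'(2) kap w(2) p fw' by simp
  also have "ln (kap * f w * f p) = ln kap + ln (f w) + ln (f p)" using kap w(2) p by (simp add: ln_mult)
  finally have l: "ln (f w') \<ge> real (Suc k) * ln (f p) + (real (Suc k) - 1) * ln kap"
    using w(3) by (simp add: algebra_simps)
  have "idx_vec w' - real (Suc k) *\<^sub>R idx_vec p = (idx_vec w' - (idx_vec w + idx_vec p)) + (idx_vec w - real k *\<^sub>R idx_vec p)"
    by (simp add: algebra_simps)
  then have "l1norm (idx_vec w' - real (Suc k) *\<^sub>R idx_vec p) \<le> a + (real k - 1) * a"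
    using w'(1) w(1) by (rule l1norm_tri3)
  then have "l1norm (idx_vec w' - real (Suc k) *\<^sub>R idx_vec p) \<le> (real (Suc k) - 1) * a" by (simp add: algebra_simps)
  with fw' l show ?case by blast
qed

lemma COMB:
  assumes p: "f p > 0" and q: "f q > 0" and k: "k \<ge> 1" and l: "l \<ge> 1"
  shows "\<exists>w. l1norm (idx_vec w - (real k *\<^sub>R idx_vec p + real l *\<^sub>R idx_vec q)) \<le> (real k + real l) * a \<and> f w > 0 \<and>
             ln (f w) \<ge> real k * ln (f p) + real l * ln (f q) + (real k + real l) * ln kap"
proof -
  obtain w1 where w1: "l1norm (idx_vec w1 - real k *\<^sub>R idx_vec p) \<le> (real k - 1) * a" "f w1 > 0"
             "ln (f w1) \<ge> real k * ln (f p) + (real k - 1) * ln kap" using IT[OF p k] by blast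
  obtain w2 where w2: "l1norm (idx_vec w2 - real l *\<^sub>R idx_vec q) \<le> (real l - 1) * a" "f w2 > 0"
             "ln (f w2) \<ge> real l * ln (f q) + (real l - 1) * ln kap" using IT[OF q l] by blast
  obtain w where w: "l1norm (idx_vec w - (idx_vec w1 + idx_vec w2)) \<le> a" "f w \<ge> kap * f w1 * f w2"
    using CGL[OF w1(2) w2(2)] by blast
  have fw: "f w > 0" using w(2) kap w1(2) w2(2) by (smt (verit) mult_pos_pos)
  have "ln (f w) \<ge> ln (kap * f w1 * f w2)" using ln_le_cancel_iff[of "kap * f w1 * f w2" "f w"] w(2) kap w1(2) w2(2) fw by simp
  also have "ln (kap * f w1 * f w2) = ln kap + ln (f w1) + ln (f w2)" using kap w1(2) w2(2) by (simp add: ln_mult)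
  finally have "ln (f w) \<ge> real k * ln (f p) + real l * ln (f q) + (real k + real l - 1) * ln kap"
    using w1(3) w2(3) by (simp add: algebra_simps)
  moreover have "(real k + real l - 1) * ln kap \<ge> (real k + real l) * ln kap" using kap by (simp add: algebra_simps)
  ultimately have lw: "ln (f w) \<ge> real k * ln (f p) + real l * ln (f q) + (real k + real l) * ln kap" by linarith
  have "idx_vec w - (real k *\<^sub>R idx_vec p + real l *\<^sub>R idx_vec q) =
        (idx_vec w - (idx_vec w1 + idx_vec w2)) + ((idx_vec w1 - real k *\<^sub>R idx_vec p) + (idx_vec w2 - real l *\<^sub>R idx_vec q))"
    by (simp add: algebra_simps)
  then have "l1norm (idx_vec w - (real k *\<^sub>R idx_vec p + real l *\<^sub>R idx_vec q)) \<le> a + ((real k - 1) * a + (real l - 1) * a)"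
    using w(1) l1norm_tri3[OF refl w1(1) w2(1)] by (rule l1norm_tri3)
  also have "\<dots> \<le> (real k + real l) * a" using a by (simp add: algebra_simps)
  finally show ?thesis using fw lw by blast
qed


lemma SA:
  assumes xn: "\<And>j. x$j \<ge> 0" and yn: "\<And>j. y$j \<ge> 0" and x0: "x \<noteq> 0" and y0: "y \<noteq> 0"
    and t1: "ereal t1 \<le> psi x" and t2: "ereal t2 \<le> psi y"
  shows "ereal (t1 + t2) \<le> psi (x + y)"
proof -
  define X where "X = l1norm x"
  define Y where "Y = l1norm y"
  define Z where "Z = l1norm (x + y)"
  define T where "T = t1 + t2"
  have X: "X > 0" using l1pos[OF x0] by (simp add: X_def)
  have Y: "Y > 0" using l1pos[OF y0] by (simp add: Y_def)
  have ZXY: "Z = X + Y" unfolding Z_def X_def Y_def by (rule l1norm_add_nonneg[OF xn yn])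
  have Z: "Z > 0" using X Y ZXY by simp
  have xy0: "x + y \<noteq> 0" using Z by (auto simp: Z_def)
  have main: "ereal (T/Z) \<le> tau f C" if C: "open_cone C" "x + y \<in> C" for C
  proof -
    obtain r where r: "r > 0" "\<And>w s. s > 0 \<Longrightarrow> l1norm (w - s *\<^sub>R (x + y)) < s * r \<Longrightarrow> w \<in> C"
      using open_cone_ball[OF C] by blast
    have step: "ereal (T/Z - \<eta>) \<le> tau f C" if eta: "\<eta> > 0" for \<eta>
    proof -
      define \<theta> where "\<theta> = T/Z - \<eta>"
      define \<epsilon> where "\<epsilon> = min (min (r/6) (Z/10)) (\<eta> * Z / (4 + 5 * \<bar>\<theta>\<bar>))"
      have ep: "\<epsilon> > 0" using r Z eta unfolding \<epsilon>_def by (simp add: pos_add_strict)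
      have er: "\<epsilon> \<le> r/6" and eZ: "\<epsilon> \<le> Z/10" and eth: "\<epsilon> \<le> \<eta> * Z / (4 + 5 * \<bar>\<theta>\<bar>)"
        unfolding \<epsilon>_def by linarith+
      have eth': "\<epsilon> * (4 + 5 * \<bar>\<theta>\<bar>) \<le> \<eta> * Z"
      proof -
        have "4 + 5 * \<bar>\<theta>\<bar> > 0" by (simp add: pos_add_strict)
        with eth show ?thesis by (simp add: field_simps)
      qed
      define Lam where "Lam = max (max (a/\<epsilon>) (2 * \<bar>ln kap\<bar> / \<epsilon>)) 1"
      have Lam: "Lam \<ge> a/\<epsilon>" "Lam \<ge> 2 * \<bar>ln kap\<bar> / \<epsilon>" "Lam \<ge> 1" unfolding Lam_def by auto
      have aL: "a / Lam \<le> \<epsilon>"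
      proof -
        have "a \<le> \<epsilon> * Lam" using Lam(1) ep by (simp add: field_simps)
        then show ?thesis using Lam(3) by (simp add: field_simps)
      qed
      have kL: "2 * \<bar>ln kap\<bar> / Lam \<le> \<epsilon>"
      proof -
        have "2 * \<bar>ln kap\<bar> \<le> \<epsilon> * Lam" using Lam(2) ep by (simp add: field_simps)
        then show ?thesis using Lam(3) by (simp add: field_simps)
      qed
      show ?thesis
        unfolding \<theta>_def[symmetric]
      proof (rule T_low)
        fix R0 :: real
        obtain p lam where p: "lam \<ge> Lam" "l1norm (idx_vec p - lam *\<^sub>R x) \<le> \<epsilon> * lam" "f p > 0"
          "ln (f p) \<ge> lam * t1 - \<epsilon> * lam" using LB[OF x0 t1 ep] by blast
        obtain q mu where q: "mu \<ge> Lam" "l1norm (idx_vec q - mu *\<^sub>R y) \<le> \<epsilon> * mu" "f q > 0"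
          "ln (f q) \<ge> mu * t2 - \<epsilon> * mu" using LB[OF y0 t2 ep] by blast
        have lam0: "lam > 0" and mu0: "mu > 0" using p(1) q(1) Lam(3) by linarith+
        define stuff where "stuff = lam + lam * (X + \<bar>t1 - \<epsilon>\<bar>) / \<epsilon> + 2 * \<bar>R0\<bar> / Z"
        define N where "N = nat \<lceil>stuff / mu\<rceil> + 1"
        define s where "s = real N * mu"
        have N1: "N \<ge> 1" by (simp add: N_def)
        have "stuff / mu \<le> real N" unfolding N_def by linarith
        then have sst: "stuff \<le> s" using mu0 by (simp add: s_def field_simps)
        have st1: "lam * X \<le> \<epsilon> * s" "lam * \<bar>t1 - \<epsilon>\<bar> \<le> \<epsilon> * s" "lam \<le> s" "\<bar>R0\<bar> \<le> s * Z / 2"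
        proof -
          have nn: "lam * X / \<epsilon> \<ge> 0" "lam * \<bar>t1 - \<epsilon>\<bar> / \<epsilon> \<ge> 0" "2 * \<bar>R0\<bar> / Z \<ge> 0" "lam \<ge> 0"
            using lam0 X ep Z by auto
          have sp: "stuff = lam + lam * X / \<epsilon> + lam * \<bar>t1 - \<epsilon>\<bar> / \<epsilon> + 2 * \<bar>R0\<bar> / Z"
            unfolding stuff_def by (simp add: add_divide_distrib distrib_left)
          have "lam * X / \<epsilon> \<le> s" "lam * \<bar>t1 - \<epsilon>\<bar> / \<epsilon> \<le> s" "lam \<le> s" "2 * \<bar>R0\<bar> / Z \<le> s"
            using sst nn unfolding sp by linarith+
          then show "lam * X \<le> \<epsilon> * s" "lam * \<bar>t1 - \<epsilon>\<bar> \<le> \<epsilon> * s" "lam \<le> s" "\<bar>R0\<bar> \<le> s * Z / 2"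
            using ep Z by (simp_all add: field_simps)
        qed
        have s0: "s > 0" using st1(3) lam0 by linarith
        define k where "k = nat \<lfloor>s / lam\<rfloor>"
        have sl1: "s / lam \<ge> 1" using st1(3) lam0 by (simp add: field_simps)
        have kfl: "real k = of_int \<lfloor>s / lam\<rfloor>" unfolding k_def using sl1 by simp
        have k1: "k \<ge> 1" unfolding k_def using sl1 by (simp add: le_nat_iff one_le_floor)
        have kl: "real k * lam \<le> s" "real k * lam > s - lam"
        proof -
          have "real k \<le> s / lam" "real k > s / lam - 1" unfolding kfl by linarith+
          then show "real k * lam \<le> s" "real k * lam > s - lam" using lam0 by (simp_all add: field_simps)
        qed
        have kLam: "real k \<le> s / Lam"
        proof -
          have "real k * Lam \<le> real k * lam" using p(1) by (simp add: mult_left_mono)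
          then have "real k * Lam \<le> s" using kl by linarith
          then show ?thesis using Lam(3) by (simp add: field_simps)
        qed
        have NLam: "real N \<le> s / Lam"
        proof -
          have "real N * Lam \<le> real N * mu" using q(1) by (simp add: mult_left_mono)
          then show ?thesis using Lam(3) by (simp add: field_simps s_def)
        qed
        have kN: "real k + real N \<le> 2 * s / Lam" using kLam NLam by simp
        obtain w where w: "l1norm (idx_vec w - (real k *\<^sub>R idx_vec p + real N *\<^sub>R idx_vec q)) \<le> (real k + real N) * a"
          "f w > 0" "ln (f w) \<ge> real k * ln (f p) + real N * ln (f q) + (real k + real N) * ln kap"
          using COMB[OF p(3) q(3) k1 N1] by blast
        have pos1: "(real k + real N) * a \<le> 2 * \<epsilon> * s"
        proof -
          have "(real k + real N) * a \<le> (2 * s / Lam) * a" by (rule mult_right_mono[OF kN]) (use a in simp)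
          also have "\<dots> = 2 * s * (a / Lam)" by simp
          also have "\<dots> \<le> 2 * s * \<epsilon>" using aL s0 by (intro mult_left_mono) auto
          finally show ?thesis by (simp add: algebra_simps)
        qed
        have pos2: "l1norm (real k *\<^sub>R (idx_vec p - lam *\<^sub>R x)) \<le> \<epsilon> * s"
        proof -
          have "l1norm (real k *\<^sub>R (idx_vec p - lam *\<^sub>R x)) \<le> real k * (\<epsilon> * lam)"
            using p(2) by (simp add: l1norm_scale mult_left_mono)
          also have "\<dots> = \<epsilon> * (real k * lam)" by simp
          also have "\<dots> \<le> \<epsilon> * s" using kl ep by (intro mult_left_mono) auto
          finally show ?thesis .
        qed
        have pos3: "l1norm ((real k * lam - s) *\<^sub>R x) \<le> \<epsilon> * s"
        proof -
          have "l1norm ((real k * lam - s) *\<^sub>R x) = \<bar>real k * lam - s\<bar> * X" by (simp add: l1norm_scale X_def)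
          also have "\<dots> \<le> lam * X" using kl X by (intro mult_right_mono) auto
          finally show ?thesis using st1(1) by linarith
        qed
        have pos4: "l1norm (real N *\<^sub>R (idx_vec q - mu *\<^sub>R y)) \<le> \<epsilon> * s"
        proof -
          have "l1norm (real N *\<^sub>R (idx_vec q - mu *\<^sub>R y)) \<le> real N * (\<epsilon> * mu)"
            using q(2) by (simp add: l1norm_scale mult_left_mono)
          then show ?thesis by (simp add: s_def algebra_simps)
        qed
        have decomp: "idx_vec w - s *\<^sub>R (x + y) =
            (idx_vec w - (real k *\<^sub>R idx_vec p + real N *\<^sub>R idx_vec q)) +
            ((real k *\<^sub>R (idx_vec p - lam *\<^sub>R x) + (real k * lam - s) *\<^sub>R x) + real N *\<^sub>R (idx_vec q - mu *\<^sub>R y))"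
          by (simp add: s_def algebra_simps)
        have wpos: "l1norm (idx_vec w - s *\<^sub>R (x + y)) \<le> (real k + real N) * a + ((\<epsilon> * s + \<epsilon> * s) + \<epsilon> * s)"
          by (rule l1norm_tri3[OF decomp w(1) l1norm_tri3[OF refl l1norm_tri3[OF refl pos2 pos3] pos4]])
        then have wpos': "l1norm (idx_vec w - s *\<^sub>R (x + y)) \<le> 5 * \<epsilon> * s" using pos1 by linarith
        have "5 * \<epsilon> * s < s * r" using er ep s0 by (simp add: field_simps)
        then have "l1norm (idx_vec w - s *\<^sub>R (x + y)) < s * r" using wpos' by linarith
        then have wC: "idx_vec w \<in> C" by (rule r(2)[OF s0])
        have sZ: "l1norm (s *\<^sub>R (x + y)) = s * Z" using s0 by (simp add: l1norm_scale Z_def)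
        have wn: "\<bar>l1norm (idx_vec w) - s * Z\<bar> \<le> 5 * \<epsilon> * s"
          using l1norm_rev_tri[of "idx_vec w" "s *\<^sub>R (x + y)"] sZ wpos' by linarith
        have lw1: "real k * ln (f p) \<ge> s * (t1 - \<epsilon>) - lam * \<bar>t1 - \<epsilon>\<bar>"
        proof -
          have "real k * ln (f p) \<ge> real k * (lam * (t1 - \<epsilon>))"
            using p(4) by (intro mult_left_mono) (auto simp: algebra_simps)
          moreover have "\<bar>(real k * lam - s) * (t1 - \<epsilon>)\<bar> \<le> lam * \<bar>t1 - \<epsilon>\<bar>"
            unfolding abs_mult using kl by (intro mult_right_mono) auto
          ultimately show ?thesis by (simp add: algebra_simps abs_le_iff)
        qed
        have lw2: "real N * ln (f q) \<ge> s * (t2 - \<epsilon>)"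
        proof -
          have "real N * ln (f q) \<ge> real N * (mu * (t2 - \<epsilon>))"
            using q(4) by (intro mult_left_mono) (auto simp: algebra_simps)
          then show ?thesis by (simp add: s_def algebra_simps)
        qed
        have lw3: "(real k + real N) * ln kap \<ge> - (\<epsilon> * s)"
        proof -
          have "(real k + real N) * \<bar>ln kap\<bar> \<le> (2 * s / Lam) * \<bar>ln kap\<bar>" by (rule mult_right_mono[OF kN]) simp
          also have "\<dots> = s * (2 * \<bar>ln kap\<bar> / Lam)" by simp
          also have "\<dots> \<le> s * \<epsilon>" using kL s0 by (intro mult_left_mono) auto
          finally have "(real k + real N) * \<bar>ln kap\<bar> \<le> \<epsilon> * s" by (simp add: mult.commute)
          moreover have "(real k + real N) * ln kap = - ((real k + real N) * \<bar>ln kap\<bar>)" using kap(3) by simp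
          ultimately show ?thesis by linarith
        qed
        have lnw: "ln (f w) \<ge> s * (T - 4 * \<epsilon>)"
          using w(3) lw1 lw2 lw3 st1(2) by (simp add: T_def algebra_simps)
        have "\<theta> * l1norm (idx_vec w) \<le> \<theta> * (s * Z) + \<bar>\<theta>\<bar> * (5 * \<epsilon> * s)"
        proof -
          have "\<bar>\<theta> * (l1norm (idx_vec w) - s * Z)\<bar> \<le> \<bar>\<theta>\<bar> * (5 * \<epsilon> * s)"
            unfolding abs_mult using wn by (intro mult_left_mono) auto
          then show ?thesis by (simp add: algebra_simps abs_le_iff)
        qed
        also have "\<theta> * (s * Z) = s * T - s * (\<eta> * Z)" using Z by (simp add: \<theta>_def field_simps)
        also have "s * T - s * (\<eta> * Z) + \<bar>\<theta>\<bar> * (5 * \<epsilon> * s) \<le> s * (T - 4 * \<epsilon>)"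
        proof -
          have "s * (\<epsilon> * (4 + 5 * \<bar>\<theta>\<bar>)) \<le> s * (\<eta> * Z)" using eth' s0 by (intro mult_left_mono) auto
          then show ?thesis by (simp add: algebra_simps)
        qed
        finally have "\<theta> * l1norm (idx_vec w) \<le> ln (f w)" using lnw by linarith
        moreover have "l1norm (idx_vec w) \<ge> R0"
        proof -
          have "5 * \<epsilon> * s \<le> s * Z / 2" using eZ s0 by (simp add: field_simps)
          then have "l1norm (idx_vec w) \<ge> s * Z / 2" using wn by linarith
          then show ?thesis using st1(4) by linarith
        qed
        ultimately show "\<exists>i. idx_vec i \<in> C \<and> l1norm (idx_vec i) \<ge> R0 \<and> f i > 0 \<and> ln (f i) \<ge> \<theta> * l1norm (idx_vec i)"
          using wC w(2) by blast
      qed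
    qed
    show ?thesis
    proof (cases "tau f C")
      case (real rr)
      show ?thesis
      proof (rule ccontr)
        assume "\<not> ereal (T/Z) \<le> tau f C"
        then have "rr < T/Z" using real by simp
        then have "T/Z - (T/Z - rr)/2 > rr" by (simp add: field_simps)
        moreover have "ereal (T/Z - (T/Z - rr)/2) \<le> tau f C" using step \<open>rr < T/Z\<close> by simp
        ultimately show False using real by simp
      qed
    next
      case PInf then show ?thesis by simp
    next
      case MInf with step[of 1] show ?thesis by simp
    qed
  qed
  have "ereal (l1norm (x + y) * (T/Z)) \<le> psi (x + y)" by (rule psi_ge[OF xy0 main])
  then show ?thesis using Z by (simp add: T_def Z_def[symmetric])
qed


end

locale psF = psCG f a b c for f :: "nat^'d \<Rightarrow> real" and a b c +
  assumes bdd: "(SUP x\<in>{x. l1norm x = 1}. indicatrice f x) < \<infinity>"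
begin

lemma bnd: "\<exists>m\<ge>0. \<forall>y. psi y \<le> ereal (m * l1norm y)"
proof -
  obtain m where m: "m \<ge> 0" "(SUP x\<in>{x. l1norm x = 1}. indicatrice f x) \<le> ereal m"
  proof (cases "(SUP x\<in>{x. l1norm x = 1}. indicatrice f x)")
    case (real r) then show ?thesis using that[of "max r 0"] by simp
  next
    case PInf then show ?thesis using bdd by simp
  next
    case MInf then show ?thesis using that[of 0] by simp
  qed
  have "psi y \<le> ereal (m * l1norm y)" for y
  proof (cases "y = 0")
    case True then show ?thesis by (simp add: psi0)
  next
    case False
    define l where "l = l1norm y"
    have l: "l > 0" using l1pos[OF False] by (simp add: l_def)
    define y' where "y' = (1/l) *\<^sub>R y"
    have "l1norm y' = 1" using l by (simp add: y'_def l1norm_scale l_def)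
    then have "psi y' \<le> (SUP x\<in>{x. l1norm x = 1}. indicatrice f x)" by (intro SUP_upper) auto
    with m have py': "psi y' \<le> ereal m" by simp
    have "y = l *\<^sub>R y'" using l by (simp add: y'_def)
    then have "psi y = ereal l * psi y'" using psi_homog[OF l, of y'] by simp
    also have "\<dots> \<le> ereal l * ereal m" using py' l by (intro ereal_mult_left_mono) auto
    finally show ?thesis by (simp add: l_def mult.commute)
  qed
  with m show ?thesis by blast
qed

lemma psi_fin: "psi y < \<infinity>"
proof -
  obtain m where "psi y \<le> ereal (m * l1norm y)" using bnd by blast
  then show ?thesis by (cases "psi y") auto
qed

definition Kset :: "((real^'d) \<times> real) set" where
  "Kset = {p. ereal (snd p) \<le> psi (fst p)}"

lemma K_scale: "ereal t \<le> psi y \<Longrightarrow> s > 0 \<Longrightarrow> ereal (s * t) \<le> psi (s *\<^sub>R y)"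
proof -
  assume t: "ereal t \<le> psi y" and s: "s > 0"
  have "ereal (s * t) = ereal s * ereal t" by simp
  also have "\<dots> \<le> ereal s * psi y" using t s by (intro ereal_mult_left_mono) auto
  also have "\<dots> = psi (s *\<^sub>R y)" using psi_homog[OF s] by simp
  finally show ?thesis .
qed

lemma K_convex: "convex Kset"
  unfolding convex_def
proof (intro ballI allI impI)
  fix p1 p2 :: "(real^'d) \<times> real" and u v :: real
  assume p1: "p1 \<in> Kset" and p2: "p2 \<in> Kset" and uv: "0 \<le> u" "0 \<le> v" "u + v = 1"
  obtain y1 t1 where e1: "p1 = (y1, t1)" by fastforce
  obtain y2 t2 where e2: "p2 = (y2, t2)" by fastforce
  have k1: "ereal t1 \<le> psi y1" and k2: "ereal t2 \<le> psi y2" using p1 p2 e1 e2 by (auto simp: Kset_def)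
  have goal: "ereal (u * t1 + v * t2) \<le> psi (u *\<^sub>R y1 + v *\<^sub>R y2)"
  proof (cases "u = 0")
    case True then show ?thesis using uv k2 by simp
  next
    case u0: False
    show ?thesis
    proof (cases "v = 0")
      case True then show ?thesis using uv k1 by simp
    next
      case v0: False
      have up: "u > 0" and vp: "v > 0" using u0 v0 uv by auto
      have s1: "ereal (u * t1) \<le> psi (u *\<^sub>R y1)" by (rule K_scale[OF k1 up])
      have s2: "ereal (v * t2) \<le> psi (v *\<^sub>R y2)" by (rule K_scale[OF k2 vp])
      have g1: "psi (u *\<^sub>R y1) > -\<infinity>" using s1 by (cases "psi (u *\<^sub>R y1)") auto
      have g2: "psi (v *\<^sub>R y2) > -\<infinity>" using s2 by (cases "psi (v *\<^sub>R y2)") auto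
      have nn1: "\<And>j. (u *\<^sub>R y1)$j \<ge> 0" by (rule psi_nonneg_dom[OF g1])
      have nn2: "\<And>j. (v *\<^sub>R y2)$j \<ge> 0" by (rule psi_nonneg_dom[OF g2])
      show ?thesis
      proof (cases "u *\<^sub>R y1 = 0")
        case z1: True
        have "psi (u *\<^sub>R y1) = 0" by (simp only: z1 psi0)
        then have "u * t1 \<le> 0" using s1 by (simp add: zero_ereal_def)
        then have "ereal (u * t1 + v * t2) \<le> ereal (v * t2)" by simp
        also have "\<dots> \<le> psi (v *\<^sub>R y2)" by (rule s2)
        finally show ?thesis by (simp only: z1 add_0_left)
      next
        case z1: False
        show ?thesis
        proof (cases "v *\<^sub>R y2 = 0")
          case z2: True
          have "psi (v *\<^sub>R y2) = 0" by (simp only: z2 psi0)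
          then have "v * t2 \<le> 0" using s2 by (simp add: zero_ereal_def)
          then have "ereal (u * t1 + v * t2) \<le> ereal (u * t1)" by simp
          also have "\<dots> \<le> psi (u *\<^sub>R y1)" by (rule s1)
          finally show ?thesis by (simp only: z2 add_0_right)
        next
          case z2: False
          show ?thesis by (rule SA[OF nn1 nn2 z1 z2 s1 s2])
        qed
      qed
    qed
  qed
  then show "u *\<^sub>R p1 + v *\<^sub>R p2 \<in> Kset" using e1 e2 by (simp add: Kset_def)
qed

lemma between: "psi y < ereal t \<Longrightarrow> \<exists>c. psi y < ereal c \<and> c < t"
proof -
  assume h: "psi y < ereal t"
  show ?thesis
  proof (cases "psi y")
    case (real r) then show ?thesis using h by (intro exI[of _ "(r+t)/2"]) auto
  next
    case PInf then show ?thesis using h by simp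
  next
    case MInf then show ?thesis by (intro exI[of _ "t - 1"]) auto
  qed
qed

lemma K_closed: "closed Kset"
  unfolding closed_def
proof (subst open_subopen, intro ballI)
  fix p assume "p \<in> - Kset"
  obtain y t where p: "p = (y, t)" by (cases p) blast
  have lt: "psi y < ereal t" using \<open>p \<in> - Kset\<close> p by (auto simp: Kset_def)
  show "\<exists>T. open T \<and> p \<in> T \<and> T \<subseteq> - Kset"
  proof (cases "y = 0")
    case True
    then have t0: "t > 0" using lt by (simp add: psi0 zero_ereal_def)
    obtain m where m: "m \<ge> 0" "\<And>y. psi y \<le> ereal (m * l1norm y)" using bnd by blast
    define dl where "dl = t / (2 * (m + 1))"
    have dl: "dl > 0" using t0 m by (simp add: dl_def)
    have dlm: "dl * m < t / 2"
    proof -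
      have "dl * m \<le> dl * (m+1) - dl" by (simp add: algebra_simps)
      also have "dl * (m + 1) = t / 2" using m by (simp add: dl_def field_simps)
      finally show ?thesis using dl by linarith
    qed
    define T where "T = {w::real^'d. l1norm (w - 0) < dl} \<times> {t/2<..}"
    have "open T" unfolding T_def by (intro open_Times open_l1ball open_greaterThan)
    moreover have "p \<in> T" using True p dl t0 by (simp add: T_def)
    moreover have "T \<subseteq> - Kset"
    proof
      fix q assume "q \<in> T"
      then obtain y' s where q: "q = (y', s)" "l1norm y' < dl" "t/2 < s" by (cases q) (auto simp: T_def)
      have "psi y' \<le> ereal (m * l1norm y')" by (rule m(2))
      also have "m * l1norm y' \<le> m * dl" using q m by (intro mult_left_mono) auto
      then have "ereal (m * l1norm y') < ereal s" using dlm q by (simp add: mult.commute)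
      finally show "q \<in> - Kset" using q by (auto simp: Kset_def)
    qed
    ultimately show ?thesis by blast
  next
    case False
    obtain cc where cc: "psi y < ereal cc" "cc < t" using between[OF lt] by blast
    obtain C where C: "open_cone C" "y \<in> C" "ereal (l1norm y) * tau f C < ereal cc"
      using psi_lt_tau[OF False cc(1)] by blast
    have bound: "\<exists>N. open N \<and> y \<in> N \<and> (\<forall>y'\<in>N. psi y' < ereal cc)"
    proof (cases "tau f C")
      case MInf
      define N where "N = C \<inter> - {0}"
      have "open N" using C(1) unfolding N_def open_cone_def by (intro open_Int) auto
      moreover have "y \<in> N" using C False by (simp add: N_def)
      moreover have "\<forall>y'\<in>N. psi y' < ereal cc"
      proof
        fix y' assume "y' \<in> N"
        then have y': "y' \<noteq> 0" "y' \<in> C" by (auto simp: N_def)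
        have "psi y' \<le> ereal (l1norm y') * tau f C" by (rule psi_le_tau[OF y'(1) C(1) y'(2)])
        also have "\<dots> = -\<infinity>" using MInf l1pos[OF y'(1)] by simp
        finally show "psi y' < ereal cc" by simp
      qed
      ultimately show ?thesis by blast
    next
      case PInf
      then show ?thesis using C(3) l1pos[OF False] by simp
    next
      case (real tt)
      define N where "N = C \<inter> - {0} \<inter> {w. l1norm w * tt < cc}"
      have "open {w::real^'d. l1norm w * tt < cc}"
        by (rule open_Collect_less) (auto intro!: continuous_intros continuous_on_l1norm_UNIV)
      then have "open N" using C(1) unfolding N_def open_cone_def by (intro open_Int) auto
      moreover have "y \<in> N" using C False real by (simp add: N_def)
      moreover have "\<forall>y'\<in>N. psi y' < ereal cc"
      proof
        fix y' assume "y' \<in> N"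
        then have y': "y' \<noteq> 0" "y' \<in> C" "l1norm y' * tt < cc" by (auto simp: N_def)
        have "psi y' \<le> ereal (l1norm y') * tau f C" by (rule psi_le_tau[OF y'(1) C(1) y'(2)])
        also have "\<dots> = ereal (l1norm y' * tt)" using real by simp
        also have "ereal (l1norm y' * tt) < ereal cc" using y'(3) by simp
        finally show "psi y' < ereal cc" .
      qed
      ultimately show ?thesis by blast
    qed
    then obtain N where N: "open N" "y \<in> N" "\<And>y'. y' \<in> N \<Longrightarrow> psi y' < ereal cc" by blast
    define T where "T = N \<times> {cc<..}"
    have "open T" unfolding T_def by (intro open_Times N(1) open_greaterThan)
    moreover have "p \<in> T" using N(2) cc p by (simp add: T_def)
    moreover have "T \<subseteq> - Kset"
    proof
      fix q assume "q \<in> T"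
      then obtain y' s where q: "q = (y', s)" "y' \<in> N" "cc < s" by (cases q) (auto simp: T_def)
      have "psi y' < ereal cc" by (rule N(3)[OF q(2)])
      also have "ereal cc < ereal s" using q by simp
      finally show "q \<in> - Kset" using q by (auto simp: Kset_def)
    qed
    ultimately show ?thesis by blast
  qed
qed

lemma sep0:
  assumes nk: "\<not> ereal m0 \<le> psi z0"
  shows "\<exists>aa \<alpha>. \<alpha> \<le> 0 \<and> inner aa z0 + \<alpha> * m0 < 0 \<and> (\<forall>y t. ereal t \<le> psi y \<longrightarrow> inner aa y + \<alpha> * t \<ge> 0)"
proof -
  have "(z0, m0) \<notin> Kset" using nk by (simp add: Kset_def)
  from separating_hyperplane_closed_point[OF K_convex K_closed this]
  obtain A B where AB: "inner A (z0, m0) < B" "\<And>k. k \<in> Kset \<Longrightarrow> inner A k > B" by blast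
  define aa where "aa = fst A"
  define \<alpha> where "\<alpha> = snd A"
  have inA: "inner A (y, t) = inner aa y + \<alpha> * t" for y t
    unfolding aa_def \<alpha>_def by (cases A) (simp add: inner_Pair)
  have inK: "ereal t \<le> psi y \<Longrightarrow> inner aa y + \<alpha> * t > B" for y t
    using AB(2)[of "(y, t)"] by (simp add: Kset_def inA)
  have B0: "B < 0" using inK[of 0 0] by (simp add: psi0)
  have nonneg: "inner aa y + \<alpha> * t \<ge> 0" if yt: "ereal t \<le> psi y" for y t
  proof (rule ccontr)
    assume neg: "\<not> inner aa y + \<alpha> * t \<ge> 0"
    define v where "v = inner aa y + \<alpha> * t"
    have v: "v < 0" using neg by (simp add: v_def)
    define s where "s = 2 * B / v"
    have s: "s > 0" using v B0 by (simp add: s_def divide_neg_neg)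
    have "ereal (s * t) \<le> psi (s *\<^sub>R y)" by (rule K_scale[OF yt s])
    then have "inner aa (s *\<^sub>R y) + \<alpha> * (s * t) > B" by (rule inK)
    moreover have "inner aa (s *\<^sub>R y) + \<alpha> * (s * t) = s * v" by (simp add: v_def algebra_simps)
    moreover have "s * v = 2 * B" using v by (simp add: s_def)
    ultimately show False using B0 by simp
  qed
  have "\<alpha> \<le> 0" using nonneg[of "-1" 0] by (simp add: psi0)
  moreover have "inner aa z0 + \<alpha> * m0 < 0" using AB(1) B0 inA by simp
  ultimately show ?thesis using nonneg by blast
qed

lemma H_from_sep:
  assumes al: "\<alpha> < 0" and nn: "\<forall>y t. ereal t \<le> psi y \<longrightarrow> inner aa y + \<alpha> * t \<ge> 0"
  shows "psi y \<le> ereal (- inner y ((1/\<alpha>) *\<^sub>R aa))"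
proof (cases "psi y")
  case (real t)
  then have "inner aa y + \<alpha> * t \<ge> 0" using nn by simp
  then have "t \<le> - inner y ((1/\<alpha>) *\<^sub>R aa)" using al by (simp add: field_simps inner_commute)
  then show ?thesis using real by simp
next
  case PInf then show ?thesis using psi_fin[of y] by simp
qed simp

lemma DUAL:
  assumes lt: "psi x < ereal mm"
  shows "\<exists>u. (\<forall>y. psi y \<le> ereal (- inner y u)) \<and> - inner x u < mm"
proof -
  have "\<not> ereal 1 \<le> psi 0" by (simp add: psi0)
  from sep0[OF this] obtain a0 \<alpha>0 where s0: "\<alpha>0 \<le> 0" "inner a0 0 + \<alpha>0 * 1 < 0"
    "\<forall>y t. ereal t \<le> psi y \<longrightarrow> inner a0 y + \<alpha>0 * t \<ge> 0" by blast
  have al0: "\<alpha>0 < 0" using s0(2) by simp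
  define u0 where "u0 = (1/\<alpha>0) *\<^sub>R a0"
  have H0: "psi y \<le> ereal (- inner y u0)" for y unfolding u0_def by (rule H_from_sep[OF al0 s0(3)])
  have "\<not> ereal mm \<le> psi x" using lt by simp
  from sep0[OF this] obtain aa \<alpha> where s: "\<alpha> \<le> 0" "inner aa x + \<alpha> * mm < 0"
    "\<forall>y t. ereal t \<le> psi y \<longrightarrow> inner aa y + \<alpha> * t \<ge> 0" by blast
  show ?thesis
  proof (cases "\<alpha> = 0")
    case False
    then have al: "\<alpha> < 0" using s(1) by simp
    define u where "u = (1/\<alpha>) *\<^sub>R aa"
    have "psi y \<le> ereal (- inner y u)" for y unfolding u_def by (rule H_from_sep[OF al s(3)])
    moreover have "- inner x u < mm"
    proof -
      have "inner x u = inner aa x / \<alpha>" by (simp add: u_def inner_commute)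
      moreover have "inner aa x / \<alpha> > - mm" using s(2) al by (simp add: field_simps)
      ultimately show ?thesis by simp
    qed
    ultimately show ?thesis by blast
  next
    case True
    have ax: "inner aa x < 0" using s(2) True by simp
    have ay: "ereal t \<le> psi y \<Longrightarrow> inner aa y \<ge> 0" for y t using s(3) True by auto
    define lam where "lam = (\<bar>inner x u0\<bar> + \<bar>mm\<bar> + 1) / (- inner aa x)"
    have lam: "lam > 0" unfolding lam_def by (rule divide_pos_pos) (use ax in \<open>auto intro: add_nonneg_pos\<close>)
    define u where "u = u0 - lam *\<^sub>R aa"
    have "psi y \<le> ereal (- inner y u)" for y
    proof (cases "psi y")
      case (real t)
      then have "inner aa y \<ge> 0" using ay[of t y] by simp
      then have "- inner y u0 \<le> - inner y u" using lam by (simp add: u_def inner_diff_right inner_commute)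
      then show ?thesis using H0[of y] by (meson ereal_less_eq(3) order.trans)
    next
      case PInf then show ?thesis using psi_fin[of y] by simp
    qed simp
    moreover have "- inner x u < mm"
    proof -
      have "lam * inner aa x = - (\<bar>inner x u0\<bar> + \<bar>mm\<bar> + 1)" using ax by (simp add: lam_def)
      then have "- inner x u = - inner x u0 - (\<bar>inner x u0\<bar> + \<bar>mm\<bar> + 1)"
        by (simp add: u_def inner_diff_right inner_commute)
      then show ?thesis by linarith
    qed
    ultimately show ?thesis by blast
  qed
qed


abbreviation D0 where "D0 \<equiv> abs_conv_domain f"

definition zr :: "real^'d \<Rightarrow> real \<Rightarrow> complex^'d" where
  "zr u s = (\<chi> j. complex_of_real (exp (u$j + s)))"

lemma norm_monom_le: "(\<forall>j. norm (z$j) \<le> norm (w$j)) \<Longrightarrow> norm (monom z i) \<le> norm (monom w i)"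
  unfolding monom_def prod_norm[symmetric] norm_power
  by (intro prod_mono) (auto intro: power_mono)

lemma mono_dom:
  assumes "w \<in> D0" "\<forall>j. norm (z$j) \<le> norm (w$j)"
  shows "z \<in> D0"
proof -
  have s: "(\<lambda>i. f i * norm (monom w i)) summable_on UNIV" using assms(1) by (simp add: abs_conv_domain_def)
  have "(\<lambda>i. f i * norm (monom z i)) summable_on UNIV"
  proof (rule summable_on_comparison_test[OF s])
    fix i
    show "f i * norm (monom z i) \<le> f i * norm (monom w i)"
      by (rule mult_left_mono[OF norm_monom_le[OF assms(2)] nonneg])
    show "0 \<le> f i * norm (monom z i)" by (simp add: nonneg)
  qed
  then show ?thesis by (simp add: abs_conv_domain_def)
qed

lemma zr_nz: "zr u s $ j \<noteq> 0" by (simp add: zr_def)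

lemma zr_ln: "(\<chi> j. ln (norm (zr u s $ j))) = (\<chi> j. u$j + s)"
  by (simp add: zr_def vec_eq_iff)

lemma inner_ones: "(\<forall>j. y$j \<ge> 0) \<Longrightarrow> inner y (\<chi> j. u$j + s) = inner y u + s * l1norm y"
  by (simp add: inner_vec_def l1norm_nonneg_eq algebra_simps sum.distrib sum_distrib_left)

lemma ray_in:
  assumes H: "\<And>y. psi y \<le> ereal (- inner y u)" and s: "s < 0"
  shows "zr u s \<in> interior D0"
proof -
  define u' where "u' = (\<chi> j. u$j + s/2)"
  have "(\<chi> j. complex_of_real (exp (u'$j))) \<in> D0"
  proof (rule B1[of "- s/2"])
    show "- s/2 > 0" using s by simp
    fix y assume y: "y \<in> Sd"
    then have yn: "\<forall>j. y$j \<ge> 0" and l1: "l1norm y = 1" by (auto simp: smplx_def)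
    have "inner y u' = inner y u + s/2" unfolding u'_def using inner_ones[OF yn, of u "s/2"] l1 by simp
    then show "psi y \<le> ereal (- inner y u' - - s / 2)" using H[of y] by simp
  qed
  then have zh: "zr u (s/2) \<in> D0" by (simp add: zr_def u'_def)
  define W where "W = {w::complex^'d. \<forall>j. norm (w$j) < exp (u$j + s/2)}"
  have "W = (\<Inter>j. {w. norm (w$j) < exp (u$j + s/2)})" by (auto simp: W_def)
  moreover have oj: "open {w::complex^'d. norm (w$j) < exp (u$j + s/2)}" for j
    by (rule open_Collect_less) (intro continuous_intros)+
  ultimately have oW: "open W" using oj by (simp add: open_INT)
  have inW: "zr u s \<in> W" using s by (simp add: W_def zr_def)
  have "W \<subseteq> D0"
  proof
    fix w assume "w \<in> W"
    have "\<forall>j. norm (w$j) \<le> norm (zr u (s/2) $ j)"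
    proof
      fix j
      have "norm (w$j) < exp (u$j + s/2)" using \<open>w \<in> W\<close> by (simp add: W_def)
      then show "norm (w$j) \<le> norm (zr u (s/2) $ j)" by (simp add: zr_def)
    qed
    then show "w \<in> D0" by (rule mono_dom[OF zh])
  qed
  then have "W \<subseteq> interior D0" using oW by (rule interior_maximal)
  with inW show ?thesis by blast
qed

lemma exists_fin:
  assumes ne: "interior D0 \<noteq> UNIV"
  shows "\<exists>y0\<in>Sd. psi y0 > -\<infinity>"
proof (rule ccontr)
  assume "\<not> ?thesis"
  then have all: "\<And>y. y \<in> Sd \<Longrightarrow> psi y = -\<infinity>" by auto
  have "z \<in> D0" for z
  proof -
    define u where "u = (\<chi> j. ln (norm (z$j) + 1))"
    have "(\<chi> j. complex_of_real (exp (u$j))) \<in> D0"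
      by (rule B1[of 1]) (auto simp: all)
    moreover have "\<forall>j. norm (z$j) \<le> norm ((\<chi> j. complex_of_real (exp (u$j))) $ j)"
    proof
      fix j
      have "exp (ln (norm (z$j) + 1)) = norm (z$j) + 1" by (rule exp_ln) (simp add: add_nonneg_pos)
      then show "norm (z$j) \<le> norm ((\<chi> j. complex_of_real (exp (u$j))) $ j)" by (simp add: u_def)
    qed
    ultimately show ?thesis by (rule mono_dom)
  qed
  then have "D0 = UNIV" by auto
  with ne show False by simp
qed

lemma ray_out:
  assumes ne: "interior D0 \<noteq> UNIV"
  shows "\<exists>S. \<forall>s\<ge>S. zr u s \<notin> D0"
proof -
  obtain y0 where y0: "y0 \<in> Sd" "psi y0 > -\<infinity>" using exists_fin[OF ne] by blast
  obtain r0 where r0: "psi y0 = ereal r0" using y0(2) psi_fin[of y0] by (cases "psi y0") auto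
  have yn: "\<forall>j. y0$j \<ge> 0" and l1: "l1norm y0 = 1" using y0 by (auto simp: smplx_def)
  show ?thesis
  proof (intro exI allI impI)
    fix s assume s: "s \<ge> - inner y0 u - r0 + 1"
    show "zr u s \<notin> D0"
    proof
      assume "zr u s \<in> D0"
      from A1[OF this] have "psi y0 \<le> ereal (- inner y0 (\<chi> j. ln (norm (zr u s $ j))))"
        by (simp add: zr_nz)
      also have "inner y0 (\<chi> j. ln (norm (zr u s $ j))) = inner y0 u + s"
        unfolding zr_ln inner_ones[OF yn] l1 by simp
      finally have "r0 \<le> - inner y0 u - s" using r0 by simp
      with s show False by simp
    qed
  qed
qed

lemma cont_zr: "continuous_on UNIV (zr u)"
  unfolding zr_def by (intro continuous_intros)

lemma frontier_point:
  assumes ne: "interior D0 \<noteq> UNIV" and H: "\<And>y. psi y \<le> ereal (- inner y u)"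
  shows "\<exists>s\<ge>0. zr u s \<in> frontier (interior D0)"
proof -
  define G where "G = {s. zr u s \<in> interior D0}"
  obtain S where S: "\<And>s. s \<ge> S \<Longrightarrow> zr u s \<notin> D0" using ray_out[OF ne] by blast
  have GS: "s \<in> G \<Longrightarrow> s \<le> S" for s
    using S[of s] interior_subset[of D0] by (force simp: G_def)
  have bdd: "bdd_above G" by (rule bdd_aboveI[OF GS])
  have neg: "s < 0 \<Longrightarrow> s \<in> G" for s using ray_in[OF H] by (simp add: G_def)
  have Gne: "G \<noteq> {}" using neg[of "-1"] by auto
  define ss where "ss = Sup G"
  have ss0: "ss \<ge> 0"
  proof (rule ccontr)
    assume "\<not> ss \<ge> 0"
    then have "ss/2 \<in> G" using neg by simp
    then have "ss/2 \<le> ss" unfolding ss_def by (rule cSup_upper[OF _ bdd])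
    with \<open>\<not> ss \<ge> 0\<close> show False by simp
  qed
  have cont: "\<And>e. e > 0 \<Longrightarrow> \<exists>d>0. \<forall>s. dist s ss < d \<longrightarrow> dist (zr u s) (zr u ss) < e"
    using cont_zr[of u] unfolding continuous_on_iff by blast
  have cl: "zr u ss \<in> closure (interior D0)"
    unfolding closure_approachable
  proof (intro allI impI)
    fix e :: real assume e: "e > 0"
    obtain d where d: "d > 0" "\<And>s. dist s ss < d \<Longrightarrow> dist (zr u s) (zr u ss) < e" using cont[OF e] by blast
    have "ss - d < ss" using d by simp
    then obtain g where g: "g \<in> G" "ss - d < g" unfolding ss_def using less_cSup_iff[OF Gne bdd] by blast
    have "g \<le> ss" unfolding ss_def by (rule cSup_upper[OF g(1) bdd])
    then have "dist g ss < d" using g by (simp add: dist_real_def)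
    then have "dist (zr u g) (zr u ss) < e" by (rule d(2))
    with g(1) show "\<exists>y\<in>interior D0. dist y (zr u ss) < e" by (auto simp: G_def)
  qed
  have nint: "zr u ss \<notin> interior D0"
  proof
    assume "zr u ss \<in> interior D0"
    then obtain e where e: "e > 0" "ball (zr u ss) e \<subseteq> interior D0"
      using open_contains_ball[of "interior D0"] by blast
    obtain d where d: "d > 0" "\<And>s. dist s ss < d \<Longrightarrow> dist (zr u s) (zr u ss) < e" using cont[OF e(1)] by blast
    have "dist (ss + d/2) ss < d" using d by (simp add: dist_real_def)
    then have "dist (zr u (ss + d/2)) (zr u ss) < e" by (rule d(2))
    then have "dist (zr u ss) (zr u (ss + d/2)) < e" by (simp add: dist_commute)
    then have "ss + d/2 \<in> G" using e by (auto simp: G_def)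
    then have "ss + d/2 \<le> ss" unfolding ss_def by (rule cSup_upper[OF _ bdd])
    with d show False by simp
  qed
  have "zr u ss \<in> frontier (interior D0)" using cl nint by (simp add: frontier_def)
  with ss0 show ?thesis by blast
qed

lemma value_zr:
  assumes xn: "\<forall>j. x$j \<ge> 0" and s: "s \<ge> 0"
  shows "(\<Sum>j\<in>UNIV. neglogterm (x$j) (zr u s $ j)) \<le> ereal (- inner x u)"
proof -
  have "(\<Sum>j\<in>UNIV. neglogterm (x$j) (zr u s $ j)) = (\<Sum>j\<in>UNIV. ereal (- x$j * (u$j + s)))"
    by (intro sum.cong refl) (simp add: neglogterm_def zr_def)
  also have "\<dots> = ereal (\<Sum>j\<in>UNIV. - x$j * (u$j + s))" by simp
  also have "(\<Sum>j\<in>UNIV. - x$j * (u$j + s)) = - (\<Sum>j\<in>UNIV. x$j * u$j) - s * (\<Sum>j\<in>UNIV. x$j)"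
    by (simp add: algebra_simps sum.distrib sum_distrib_left sum_negf sum_subtractf)
  also have "\<dots> = - inner x u - s * l1norm x"
    using xn by (simp add: inner_vec_def l1norm_nonneg_eq)
  also have "- inner x u - s * l1norm x \<le> - inner x u" using s l1norm_nonneg[of x] by simp
  finally show ?thesis by simp
qed


lemma partA:
  assumes xn: "\<forall>j. x$j \<ge> 0" and z: "z \<in> frontier (interior D0)"
  shows "psi x \<le> (\<Sum>j\<in>UNIV. neglogterm (x$j) (z$j))"
proof (cases "\<exists>j. x$j > 0 \<and> z$j = 0")
  case True
  then obtain j0 where j0: "x$j0 > 0" "z$j0 = 0" by blast
  have "(\<Sum>j\<in>UNIV. neglogterm (x$j) (z$j)) = \<infinity>"
    unfolding sum_Pinfty using j0 by (auto simp: neglogterm_def)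
  then show ?thesis by simp
next
  case False
  define g where "g j = (if z$j = 0 then 0 else - x$j * ln (norm (z$j)))" for j
  have x0: "x$j = 0" if zj: "z$j = 0" for j
  proof -
    have "\<not> x$j > 0" using False zj by blast
    then show ?thesis using xn by (meson linorder_not_less order_antisym)
  qed
  have tg: "neglogterm (x$j) (z$j) = ereal (g j)" for j
    using x0[of j] by (auto simp: neglogterm_def g_def)
  have V: "(\<Sum>j\<in>UNIV. neglogterm (x$j) (z$j)) = ereal (\<Sum>j\<in>UNIV. g j)" by (simp add: tg)
  define \<phi> where "\<phi> w = (\<Sum>j\<in>UNIV. - x$j * ln (norm (w$j)))" for w :: "complex^'d"
  have phz: "\<phi> z = (\<Sum>j\<in>UNIV. g j)"
    unfolding \<phi>_def by (intro sum.cong refl) (use x0 in \<open>auto simp: g_def\<close>)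
  have cterm: "isCont (\<lambda>w::complex^'d. - x$j * ln (norm (w$j))) z" for j
  proof (cases "x$j = 0")
    case True then show ?thesis by simp
  next
    case False
    then have "z$j \<noteq> 0" using x0 by blast
    then show ?thesis by (intro continuous_intros) auto
  qed
  have cphi: "isCont \<phi> z" unfolding \<phi>_def by (intro continuous_intros cterm)
  have zc: "z \<in> closure (interior D0)" using z by (simp add: frontier_def)
  have main: "psi x \<le> ereal ((\<Sum>j\<in>UNIV. g j) + e * 1)" if e: "0 < e" "e < 1" for e
  proof -
    obtain dl where dl: "dl > 0" "\<And>w. w \<noteq> z \<and> norm (w - z) < dl \<Longrightarrow> norm (\<phi> w - \<phi> z) < e"
      using LIM_D[OF isContD[OF cphi] e(1)] by blast
    have dlz: "dist w z < dl \<Longrightarrow> \<phi> w < \<phi> z + e" for w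
    proof -
      assume "dist w z < dl"
      then show "\<phi> w < \<phi> z + e"
        using dl(2)[of w] e by (cases "w = z") (auto simp: dist_norm)
    qed
    have "dl/2 > 0" using dl by simp
    then obtain w1 where w1: "w1 \<in> interior D0" "dist w1 z < dl/2"
      using zc unfolding closure_approachable by blast
    obtain e1 where e1: "e1 > 0" "ball w1 e1 \<subseteq> interior D0"
      using w1(1) open_contains_ball[of "interior D0"] by blast
    define m where "m = min e1 (dl/2)"
    have m: "m > 0" "m \<le> e1" "m \<le> dl/2" using e1 dl by (auto simp: m_def)
    define \<eta> where "\<eta> = m / (2 * real CARD('d))"
    have eta: "\<eta> > 0" using m by (simp add: \<eta>_def)
    have ceta: "real CARD('d) * \<eta> < m" using m by (simp add: \<eta>_def field_simps)
    define v where "v = (\<chi> j. if w1$j = 0 then complex_of_real \<eta> else 0)"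
    define w where "w = w1 + v"
    have nv: "norm v < m"
    proof -
      have "norm v = L2_set (\<lambda>j. norm (v$j)) UNIV" by (simp add: norm_vec_def)
      also have "\<dots> \<le> (\<Sum>j\<in>UNIV. norm (v$j))" by (rule L2_set_le_sum) simp
      also have "\<dots> \<le> (\<Sum>j\<in>(UNIV::'d set). \<eta>)" by (intro sum_mono) (use eta in \<open>simp add: v_def\<close>)
      also have "\<dots> = real CARD('d) * \<eta>" by simp
      finally show ?thesis using ceta by linarith
    qed
    have "dist w w1 = norm v" by (simp add: w_def dist_norm)
    then have "w \<in> ball w1 e1" using nv m by (simp add: dist_commute)
    then have wD: "w \<in> D0" using e1(2) interior_subset by blast
    have "dist w z \<le> dist w w1 + dist w1 z" by (rule dist_triangle)
    then have wz: "dist w z < dl" using nv m w1(2) \<open>dist w w1 = norm v\<close> by linarith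
    have wnz: "\<forall>j. w$j \<noteq> 0" using eta by (auto simp: w_def v_def)
    have "psi x \<le> ereal (- inner x (\<chi> j. ln (norm (w$j))))" by (rule A1[OF wD wnz])
    also have "- inner x (\<chi> j. ln (norm (w$j))) = \<phi> w"
      by (simp add: \<phi>_def inner_vec_def sum_negf)
    also have "\<phi> w < \<phi> z + e" by (rule dlz[OF wz])
    finally show ?thesis using phz by simp
  qed
  have "psi x \<le> ereal (\<Sum>j\<in>UNIV. g j)"
    by (rule ereal_le_eps[of 1 _ _ 1]) (use main in auto)
  then show ?thesis using V by simp
qed

end

theorem corollary1:
  fixes f :: "nat ^ 'd \<Rightarrow> real"
  assumes nonneg: "\<And>i. f i \<ge> 0"
    and int_ne: "interior (abs_conv_domain f) \<noteq> {}"
    and int_ne_UNIV: "interior (abs_conv_domain f) \<noteq> UNIV"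
    and CG: "\<exists>a b c. a > 0 \<and> b > 0 \<and> c > 0 \<and>
              (\<forall>x y. nu_ball f (x + y) a \<ge> c * nu_ball f x b * nu_ball f y b)"
    and bdd: "(SUP x\<in>{x. l1norm x = 1}. indicatrice f x) < \<infinity>"
    and xnn: "\<And>j. x $ j \<ge> 0"
  shows "indicatrice f x =
    (INF z\<in>frontier (interior (abs_conv_domain f)). \<Sum>j\<in>UNIV. neglogterm (x $ j) (z $ j))"
proof -
  obtain a b c where abc: "a > 0" "b > 0" "c > 0"
    "\<And>x y. nu_ball f (x + y) a \<ge> c * nu_ball f x b * nu_ball f y b" using CG by blast
  interpret P: psF f a b c
    by unfold_locales (use nonneg abc bdd in auto)
  have xn: "\<forall>j. x$j \<ge> 0" using xnn by blast
  let ?I = "(INF z\<in>frontier (interior (abs_conv_domain f)). \<Sum>j\<in>UNIV. neglogterm (x $ j) (z $ j))"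
  show ?thesis
  proof (rule antisym)
    show "indicatrice f x \<le> ?I"
      by (rule INF_greatest) (rule P.partA[OF xn])
  next
    have key: "?I \<le> ereal mm" if lt: "indicatrice f x < ereal mm" for mm
    proof -
      obtain u where u: "\<And>y. indicatrice f y \<le> ereal (- inner y u)" "- inner x u < mm"
        using P.DUAL[OF lt] by blast
      obtain s where s: "s \<ge> 0" "P.zr u s \<in> frontier (interior (abs_conv_domain f))"
        using P.frontier_point[OF int_ne_UNIV u(1)] by blast
      have "?I \<le> (\<Sum>j\<in>UNIV. neglogterm (x $ j) (P.zr u s $ j))" by (rule INF_lower[OF s(2)])
      also have "\<dots> \<le> ereal (- inner x u)" by (rule P.value_zr[OF xn s(1)])
      also have "\<dots> \<le> ereal mm" using u(2) by simp
      finally show ?thesis .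
    qed
    show "?I \<le> indicatrice f x"
    proof (cases "indicatrice f x")
      case (real r)
      have "?I \<le> ereal r"
        by (rule P.ereal_le_eps[of 1 _ _ 1]) (auto intro!: key simp: real)
      then show ?thesis using real by simp
    next
      case PInf then show ?thesis using P.psi_fin[of x] by simp
    next
      case MInf
      have le: "?I \<le> ereal mm" for mm by (rule key) (simp add: MInf)
      show ?thesis
      proof (cases ?I)
        case (real r) with le[of "r - 1"] show ?thesis by simp
      next
        case PInf with le[of 0] show ?thesis by simp
      qed (simp add: MInf)
    qed
  qed
qed

end
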